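(* Let $d\ge2$, $\mathcal D=\{1,\dots,d\}$, $d_s\in\{1,\dots,d-1\}$, $\beta\ge0$, $\alpha>-\beta$, $\boldsymbol\Gamma=(\Gamma_1,\dots,\Gamma_d)\in(0,1]^d$ nonincreasing, $\boldsymbol\gamma=(\gamma_1,\dots,\gamma_d)\in(0,1]^d$, and $f\in\mathcal A^{w^{\alpha,\beta}}(\mathbb T^d)$. Then $$\frac{\|f-\mathrm T_{d_s}f\|_{\mathrm L_\infty(\mathbb T^d)}}{\|f\|_{\mathcal A^{w^{\alpha,\beta}}(\mathbb T^d)}}\le\Gamma_{d_s+1}\,(2+d_s)^{-\alpha}\,2^{-\beta(d_s+1)}\prod_{s=1}^{d_s+1}\gamma^*_s,$$ where $(\gamma^*_s)_{s=1}^d$ is the nonincreasing rearrangement of $\boldsymbol\gamma$.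
   Context: $\mathbb T=[0,1)$ with periodic identification; $c_{\mathbf k}(g)$ are Fourier coefficients. For $\mathbf k\in\mathbb Z^d$, $\operatorname{supp}\mathbf k=\{i:k_i\neq0\}$ and $w^{\alpha,\beta}(\mathbf k)=\gamma_{\operatorname{supp}\mathbf k}^{-1}(1+\|\mathbf k\|_1)^\alpha\prod_{s\in\operatorname{supp}\mathbf k}(1+|k_s|)^\beta$ with POD weights $\gamma_{\mathbf u}=\Gamma_{|\mathbf u|}\prod_{s\in\mathbf u}\gamma_s$ for $\mathbf u\subseteq\mathcal D$ (here $\Gamma_0\in(0,1]$ is arbitrary). $\mathcal A^{w}(\mathbb T^d)=\{g\in\mathrm L_1:\|g\|_{\mathcal A^w}=\sum_{\mathbf k}w(\mathbf k)|c_{\mathbf k}(g)|<\infty\}$. For $\mathbf u\subseteq\mathcal D$: $\mathrm P_{\mathbf u}f(\mathbf x_{\mathbf u})=\int_{\mathbb T^{|\mathcal D\setminus\mathbf u|}}f(\mathbf x)\,d\mathbf x_{\mathcal D\setminus\mathbf u}$, ANOVA terms $f_{\mathbf u}=\mathrm P_{\mathbf u}f-\sum_{\mathbf v\subsetneq\mathbf u}f_{\mathbf v}$ (recursively), and $\mathrm T_{d_s}f=\sum_{|\mathbf u|\le d_s}f_{\mathbf u}$. *)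

theory Defs
  imports "HOL-Probability.Probability"
begin

definition torus :: "nat set \<Rightarrow> (nat \<Rightarrow> real) measure" where
  "torus D = PiM D (\<lambda>_. restrict_space lborel {0..<1})"

definition freqs :: "nat set \<Rightarrow> (nat \<Rightarrow> int) set" where
  "freqs D = {k. \<forall>i. i \<notin> D \<longrightarrow> k i = 0}"

definition fourier_coeff :: "nat set \<Rightarrow> ((nat \<Rightarrow> real) \<Rightarrow> complex) \<Rightarrow> (nat \<Rightarrow> int) \<Rightarrow> complex" where
  "fourier_coeff D g k =
     (\<integral>x. g x * exp (- 2 * pi * \<i> * complex_of_real (\<Sum>i\<in>D. real_of_int (k i) * x i)) \<partial>torus D)"

definition supp :: "(nat \<Rightarrow> int) \<Rightarrow> nat set" where
  "supp k = {i. k i \<noteq> 0}"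

definition pod_weight :: "(nat \<Rightarrow> real) \<Rightarrow> (nat \<Rightarrow> real) \<Rightarrow> nat set \<Rightarrow> real" where
  "pod_weight \<Gamma> \<gamma> u = \<Gamma> (card u) * (\<Prod>s\<in>u. \<gamma> s)"

definition norm1 :: "nat set \<Rightarrow> (nat \<Rightarrow> int) \<Rightarrow> real" where
  "norm1 D k = (\<Sum>i\<in>D. real_of_int \<bar>k i\<bar>)"

definition wab :: "nat set \<Rightarrow> real \<Rightarrow> real \<Rightarrow> (nat \<Rightarrow> real) \<Rightarrow> (nat \<Rightarrow> real) \<Rightarrow> (nat \<Rightarrow> int) \<Rightarrow> real" where
  "wab D \<alpha> \<beta> \<Gamma> \<gamma> k = inverse (pod_weight \<Gamma> \<gamma> (supp k)) * (1 + norm1 D k) powr \<alpha>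
      * (\<Prod>s\<in>supp k. (1 + real_of_int \<bar>k s\<bar>) powr \<beta>)"

definition in_wiener :: "nat set \<Rightarrow> ((nat \<Rightarrow> int) \<Rightarrow> real) \<Rightarrow> ((nat \<Rightarrow> real) \<Rightarrow> complex) \<Rightarrow> bool" where
  "in_wiener D w g \<longleftrightarrow> integrable (torus D) g \<and>
      (\<lambda>k. w k * norm (fourier_coeff D g k)) summable_on freqs D"

definition wiener_norm :: "nat set \<Rightarrow> ((nat \<Rightarrow> int) \<Rightarrow> real) \<Rightarrow> ((nat \<Rightarrow> real) \<Rightarrow> complex) \<Rightarrow> real" where
  "wiener_norm D w g = (\<Sum>\<^sub>\<infinity>k\<in>freqs D. w k * norm (fourier_coeff D g k))"

definition proj :: "nat set \<Rightarrow> nat set \<Rightarrow> ((nat \<Rightarrow> real) \<Rightarrow> complex) \<Rightarrow> (nat \<Rightarrow> real) \<Rightarrow> complex" where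
  "proj D u g x = (\<integral>y. g (\<lambda>i. if i \<in> u then x i else y i) \<partial>torus (D - u))"

function anova :: "nat set \<Rightarrow> ((nat \<Rightarrow> real) \<Rightarrow> complex) \<Rightarrow> nat set \<Rightarrow> (nat \<Rightarrow> real) \<Rightarrow> complex" where
  "anova D g u = (if finite u then (\<lambda>x. proj D u g x - (\<Sum>v\<in>Pow u - {u}. anova D g v x))
                  else (\<lambda>x. 0))"
  by pat_completeness auto
termination
  by (relation "Wellfounded.measure (\<lambda>(D, g, u). card u)")
     (auto intro: psubset_card_mono)

definition truncation :: "nat set \<Rightarrow> nat \<Rightarrow> ((nat \<Rightarrow> real) \<Rightarrow> complex) \<Rightarrow> (nat \<Rightarrow> real) \<Rightarrow> complex" where
  "truncation D ds g x = (\<Sum>u\<in>{u. u \<subseteq> D \<and> card u \<le> ds}. anova D g u x)"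

definition Linf_norm :: "nat set \<Rightarrow> ((nat \<Rightarrow> real) \<Rightarrow> complex) \<Rightarrow> ereal" where
  "Linf_norm D g = esssup (torus D) (\<lambda>x. ereal (norm (g x)))"

text \<open>Nonincreasing rearrangement of (gamma_1,...,gamma_d), indexed from 1.\<close>
definition gamma_star :: "nat \<Rightarrow> (nat \<Rightarrow> real) \<Rightarrow> nat \<Rightarrow> real" where
  "gamma_star d \<gamma> s = rev (sort (map \<gamma> [1..<d+1])) ! (s - 1)"

end

theory Submission
  imports Defs "HOL-Analysis.Analysis" "HOL-Library.Function_Algebras" "HOL-Library.Multiset"
begin

definition chr :: "nat set \<Rightarrow> (nat \<Rightarrow> int) \<Rightarrow> (nat \<Rightarrow> real) \<Rightarrow> complex" where
  "chr D k x = exp (2 * pi * \<i> * complex_of_real (\<Sum>i\<in>D. real_of_int (k i) * x i))"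

lemma fourier_coeff_chr:
  "fourier_coeff D g k = (\<integral>x. g x * chr D (- k) x \<partial>torus D)"
  unfolding fourier_coeff_def chr_def
  by (simp add: sum_negf)

lemma norm_chr[simp]: "norm (chr D k x) = 1"
  unfolding chr_def by (simp add: norm_exp_i_times[of "2 * pi * _", simplified mult.assoc] mult.assoc)

lemma unit_prob: "prob_space (restrict_space lborel {0..<1::real})"
  by (rule prob_spaceI) (simp add: emeasure_restrict_space space_restrict_space)

lemma torus_prob: "prob_space (torus D)"
  unfolding torus_def by (rule prob_space_PiM) (rule unit_prob)

lemma unit_integral_exp:
  fixes m :: int
  shows "(\<integral>t. exp (2 * pi * \<i> * complex_of_real (real_of_int m * t)) \<partial>restrict_space lborel {0..<1::real})
     = (if m = 0 then 1 else 0)"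
proof (cases "m = 0")
  case True
  interpret prob_space "restrict_space lborel {0..<1::real}" by (rule unit_prob)
  have "prob {0..<1} = 1" using prob_space by (simp add: space_restrict_space)
  then show ?thesis using True by simp
next
  case False
  define c where "c = 2 * pi * \<i> * of_int m"
  have c0: "c \<noteq> 0" using False by (simp add: c_def)
  have eq: "\<And>t. exp (2 * pi * \<i> * complex_of_real (real_of_int m * t)) = exp (c * complex_of_real t)"
    by (simp add: c_def mult_ac)
  have "(\<integral>t. exp (2 * pi * \<i> * complex_of_real (real_of_int m * t)) \<partial>restrict_space lborel {0..<1::real})
      = (\<integral>t. indicator {0..<1::real} t *\<^sub>R exp (c * complex_of_real t) \<partial>lborel)"
    by (subst integral_restrict_space) (auto simp only: eq, simp)
  also have "\<dots> = (\<integral>t. indicator {0..1::real} t *\<^sub>R exp (c * complex_of_real t) \<partial>lborel)"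
    by (rule integral_cong_AE) (auto intro!: eventually_mono[OF AE_lborel_singleton[of 1]] simp: indicator_def)
  also have "\<dots> = exp (c * complex_of_real 1) / c - exp (c * complex_of_real 0) / c"
  proof (rule integral_FTC_atLeastAtMost)
    show "continuous_on {0..1} (\<lambda>t. exp (c * complex_of_real t))"
      by (intro continuous_intros)
    fix x :: real
    have "((\<lambda>z. exp (c * z) / c) has_field_derivative exp (c * complex_of_real x)) (at (complex_of_real x))"
      using c0 by (auto intro!: derivative_eq_intros)
    then show "((\<lambda>t. exp (c * complex_of_real t) / c) has_vector_derivative exp (c * complex_of_real x)) (at x within {0..1})"
      by (rule has_vector_derivative_real_field)
  qed simp
  also have "\<dots> = 0"
  proof -
    have "c = (2 * of_real (of_int m) * pi) * \<i>" by (simp add: c_def)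
    moreover have "exp ((2 * of_real (of_int m) * pi) * \<i>) = 1"
      by (rule exp_integer_2pi) simp
    ultimately have "exp c = 1" by simp
    then show ?thesis by simp
  qed
  finally show ?thesis using False by simp
qed

abbreviation UI :: "real measure" where "UI \<equiv> restrict_space lborel {0..<1::real}"

interpretation UI: prob_space UI by (rule unit_prob)

interpretation UIP: product_prob_space "\<lambda>_::nat. UI" UNIV
  by unfold_locales

lemma chr_prod: "finite J \<Longrightarrow> chr J k y = (\<Prod>i\<in>J. exp (2 * pi * \<i> * complex_of_real (real_of_int (k i) * y i)))"
  unfolding chr_def by (simp add: sum_distrib_left exp_sum)

lemma integrable_UI_exp: "integrable UI (\<lambda>t. exp (2 * pi * \<i> * complex_of_real (real_of_int m * t)))"
  by (rule UI.integrable_const_bound[where B=1])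
     (auto simp: norm_exp_i_times[of "_", simplified] mult.assoc intro: measurable_restrict_space1)

lemma torus_integral_chr:
  assumes "finite J"
  shows "(\<integral>y. chr J k y \<partial>torus J) = (if \<forall>i\<in>J. k i = 0 then 1 else 0)"
proof -
  have "(\<integral>y. chr J k y \<partial>torus J)
     = (\<integral>y. (\<Prod>i\<in>J. exp (2 * pi * \<i> * complex_of_real (real_of_int (k i) * y i))) \<partial>PiM J (\<lambda>_. UI))"
    unfolding torus_def chr_prod[OF assms] ..
  also have "\<dots> = (\<Prod>i\<in>J. (\<integral>t. exp (2 * pi * \<i> * complex_of_real (real_of_int (k i) * t)) \<partial>UI))"
    using UIP.product_integral_prod[OF assms, of "\<lambda>i t. exp (2 * pi * \<i> * complex_of_real (real_of_int (k i) * t))"]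
    using integrable_UI_exp by simp
  also have "\<dots> = (\<Prod>i\<in>J. (if k i = 0 then 1 else 0))"
    by (intro prod.cong refl unit_integral_exp)
  also have "\<dots> = (if \<forall>i\<in>J. k i = 0 then 1 else 0)"
    using assms by (induction J rule: finite_induct) auto
  finally show ?thesis .
qed

lemma torus_coord_meas[measurable]:
  assumes "i \<in> D" shows "(\<lambda>x. x i) \<in> borel_measurable (torus D)"
proof -
  have "(\<lambda>x. x i) \<in> measurable (PiM D (\<lambda>_. UI)) UI" by (rule measurable_component_singleton[OF assms])
  moreover have "(\<lambda>x::real. x) \<in> borel_measurable UI" by (rule measurable_restrict_space1) measurable
  ultimately show ?thesis unfolding torus_def by (rule measurable_compose)
qed

lemma chr_meas[measurable]: "chr D k \<in> borel_measurable (torus D)"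
proof -
  have "(\<lambda>x. (\<Sum>i\<in>D. real_of_int (k i) * x i)) \<in> borel_measurable (torus D)"
    by (auto intro!: borel_measurable_sum borel_measurable_times torus_coord_meas)
  then show ?thesis unfolding chr_def by measurable
qed

lemma space_torus: "space (torus D) = PiE D (\<lambda>_. {0..<1})"
  unfolding torus_def by (simp add: space_PiM space_restrict_space)

interpretation TP: prob_space "torus D" for D by (rule torus_prob)

lemma integrable_chr[simp]: "integrable (torus D) (chr D k)"
  by (rule TP.integrable_const_bound[where B=1]) auto

lemma integrable_bounded_mult:
  fixes f g :: "_ \<Rightarrow> complex"
  assumes "integrable M f" "g \<in> borel_measurable M" "\<And>x. x \<in> space M \<Longrightarrow> norm (g x) \<le> B"
  shows "integrable M (\<lambda>x. f x * g x)"
proof (rule Bochner_Integration.integrable_bound[where f="\<lambda>x. B * norm (f x)"])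
  show "integrable M (\<lambda>x. B * norm (f x))" using assms(1) by simp
  show "(\<lambda>x. f x * g x) \<in> borel_measurable M"
    using borel_measurable_integrable[OF assms(1)] assms(2) by measurable
  show "AE x in M. norm (f x * g x) \<le> norm (B * norm (f x))"
  proof (rule AE_I2)
    fix x assume "x \<in> space M"
    then have "norm (g x) \<le> B" by (rule assms(3))
    then have "norm (f x) * norm (g x) \<le> norm (f x) * B" by (simp add: mult_left_mono)
    also have "\<dots> \<le> norm (B * norm (f x))" by (simp add: abs_mult mult.commute mult_right_mono)
    finally show "norm (f x * g x) \<le> norm (B * norm (f x))" by (simp add: norm_mult)
  qed
qed

lemma chr_mult: "chr D k x * chr D l x = chr D (k + l) x"
  unfolding chr_def by (simp add: exp_add[symmetric] sum.distrib distrib_left distrib_right)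

lemma chr_zero[simp]: "chr D 0 x = 1"
  unfolding chr_def by simp

lemma cnj_chr: "cnj (chr D k x) = chr D (- k) x"
  unfolding chr_def by (simp add: exp_cnj sum_negf)

lemma freqs_add: "k \<in> freqs D \<Longrightarrow> l \<in> freqs D \<Longrightarrow> k + l \<in> freqs D"
  and freqs_uminus: "k \<in> freqs D \<Longrightarrow> - k \<in> freqs D"
  and freqs_zero: "0 \<in> freqs D"
  unfolding freqs_def by auto

inductive_set TP :: "nat set \<Rightarrow> ((nat \<Rightarrow> real) \<Rightarrow> complex) set" for D where
  TP_chr: "k \<in> freqs D \<Longrightarrow> chr D k \<in> TP D"
| TP_add: "\<phi> \<in> TP D \<Longrightarrow> \<psi> \<in> TP D \<Longrightarrow> (\<lambda>x. \<phi> x + \<psi> x) \<in> TP D"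
| TP_smult: "\<phi> \<in> TP D \<Longrightarrow> (\<lambda>x. a * \<phi> x) \<in> TP D"

lemma TP_const: "(\<lambda>x. a) \<in> TP D"
proof -
  have "(\<lambda>x. a * chr D 0 x) \<in> TP D" by (intro TP_smult TP_chr freqs_zero)
  then show ?thesis by simp
qed

lemma TP_mult_chr:
  assumes "\<phi> \<in> TP D" "k \<in> freqs D"
  shows "(\<lambda>x. \<phi> x * chr D k x) \<in> TP D"
  using assms(1)
proof induction
  case (TP_chr l)
  then show ?case using assms(2) by (simp add: chr_mult TP.TP_chr freqs_add)
next
  case (TP_add \<phi> \<psi>)
  then show ?case using TP.TP_add[OF TP_add.IH] by (simp add: distrib_right)
next
  case (TP_smult \<phi> a)
  then show ?case using TP.TP_smult[OF TP_smult.IH, of a] by (simp add: mult.assoc)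
qed

lemma TP_mult:
  assumes "\<phi> \<in> TP D" "\<psi> \<in> TP D"
  shows "(\<lambda>x. \<phi> x * \<psi> x) \<in> TP D"
  using assms(2)
proof induction
  case (TP_chr l)
  then show ?case by (rule TP_mult_chr[OF assms(1)])
next
  case (TP_add \<psi>1 \<psi>2)
  then show ?case using TP.TP_add[OF TP_add.IH] by (simp add: distrib_left)
next
  case (TP_smult \<psi> a)
  then show ?case using TP.TP_smult[OF TP_smult.IH, of a] by (simp add: mult_ac)
qed

lemma TP_meas: "\<phi> \<in> TP D \<Longrightarrow> \<phi> \<in> borel_measurable (torus D)"
  by (induction rule: TP.induct) auto

lemma TP_bounded: "\<phi> \<in> TP D \<Longrightarrow> \<exists>B. \<forall>x. norm (\<phi> x) \<le> B"
proof (induction rule: TP.induct)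
  case (TP_chr k)
  then show ?case by auto
next
  case (TP_add \<phi> \<psi>)
  then obtain B1 B2 where "\<forall>x. norm (\<phi> x) \<le> B1" "\<forall>x. norm (\<psi> x) \<le> B2" by auto
  then have "\<forall>x. norm (\<phi> x + \<psi> x) \<le> B1 + B2" by (meson add_mono norm_triangle_le)
  then show ?case by blast
next
  case (TP_smult \<phi> a)
  then obtain B where "\<forall>x. norm (\<phi> x) \<le> B" by auto
  then have "\<forall>x. norm (a * \<phi> x) \<le> norm a * B" by (simp add: norm_mult mult_left_mono)
  then show ?case by blast
qed

lemma TP_integral_zero:
  assumes h: "integrable (torus D) h" and coeff: "\<And>k. k \<in> freqs D \<Longrightarrow> fourier_coeff D h k = 0"
  assumes "\<phi> \<in> TP D"
  shows "(\<integral>x. h x * \<phi> x \<partial>torus D) = 0"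
  using assms(3)
proof induction
  case (TP_chr k)
  then have "- k \<in> freqs D" by (rule freqs_uminus)
  from coeff[OF this] show ?case by (simp add: fourier_coeff_chr)
next
  case (TP_add \<phi> \<psi>)
  obtain B1 where B1: "\<forall>x. norm (\<phi> x) \<le> B1" using TP_bounded[OF TP_add(1)] by auto
  obtain B2 where B2: "\<forall>x. norm (\<psi> x) \<le> B2" using TP_bounded[OF TP_add(2)] by auto
  have i1: "integrable (torus D) (\<lambda>x. h x * \<phi> x)"
    using B1 by (intro integrable_bounded_mult[OF h TP_meas[OF TP_add(1)]]) auto
  have i2: "integrable (torus D) (\<lambda>x. h x * \<psi> x)"
    using B2 by (intro integrable_bounded_mult[OF h TP_meas[OF TP_add(2)]]) auto
  have "(\<integral>x. h x * (\<phi> x + \<psi> x) \<partial>torus D) = (\<integral>x. h x * \<phi> x + h x * \<psi> x \<partial>torus D)"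
    by (simp add: distrib_left)
  also have "\<dots> = 0" using i1 i2 TP_add.IH by simp
  finally show ?case .
next
  case (TP_smult \<phi> a)
  have "(\<integral>x. h x * (a * \<phi> x) \<partial>torus D) = (\<integral>x. a * (h x * \<phi> x) \<partial>torus D)"
    by (simp add: mult_ac)
  also have "\<dots> = 0" using TP_smult.IH by simp
  finally show ?case .
qed

lemma TP_Re_chr:
  assumes "k \<in> freqs D"
  shows "(\<lambda>x. complex_of_real (Re (chr D k x))) \<in> TP D"
proof -
  have "(\<lambda>x. (1/2) * chr D k x + (1/2) * chr D (- k) x) \<in> TP D"
    using assms by (intro TP_add TP_smult TP_chr freqs_uminus)
  moreover have "\<And>w::complex. complex_of_real (Re w) = (1/2) * w + (1/2) * cnj w"
    by (simp add: complex_eq_iff)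
  ultimately show ?thesis by (simp add: cnj_chr)
qed

lemma TP_Im_chr:
  assumes "k \<in> freqs D"
  shows "(\<lambda>x. complex_of_real (Im (chr D k x))) \<in> TP D"
proof -
  have "(\<lambda>x. (- \<i>/2) * chr D k x + (\<i>/2) * chr D (- k) x) \<in> TP D"
    using assms by (intro TP_add TP_smult TP_chr freqs_uminus)
  moreover have "\<And>w::complex. complex_of_real (Im w) = (- \<i>/2) * w + (\<i>/2) * cnj w"
    by (simp add: complex_eq_iff)
  ultimately show ?thesis by (simp add: cnj_chr)
qed

definition Etor :: "nat set \<Rightarrow> (nat \<Rightarrow> real) \<Rightarrow> (nat \<Rightarrow> complex)" where
  "Etor D x = (\<lambda>i. if i \<in> D then exp (2 * pi * \<i> * complex_of_real (x i)) else 0)"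

definition Storus :: "nat set \<Rightarrow> (nat \<Rightarrow> complex) set" where
  "Storus D = {z. \<forall>i. z i \<in> (if i \<in> D then sphere 0 1 else {0})}"

inductive_set Rring :: "((nat \<Rightarrow> complex) \<Rightarrow> real) set" where
  R_const: "(\<lambda>_. c) \<in> Rring"
| R_Re: "(\<lambda>z. Re (z i)) \<in> Rring"
| R_Im: "(\<lambda>z. Im (z i)) \<in> Rring"
| R_add: "f \<in> Rring \<Longrightarrow> g \<in> Rring \<Longrightarrow> (\<lambda>z. f z + g z) \<in> Rring"
| R_mult: "f \<in> Rring \<Longrightarrow> g \<in> Rring \<Longrightarrow> (\<lambda>z. f z * g z) \<in> Rring"

definition delta :: "nat \<Rightarrow> nat \<Rightarrow> int" where "delta i = (\<lambda>j. if j = i then 1 else 0)"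

lemma Etor_chr: "i \<in> D \<Longrightarrow> finite D \<Longrightarrow> Etor D x i = chr D (delta i) x"
proof -
  assume a: "i \<in> D" "finite D"
  have "(\<Sum>j\<in>D. real_of_int (delta i j) * x j) = (\<Sum>j\<in>D. if j = i then x j else 0)"
    by (rule sum.cong) (auto simp: delta_def)
  also have "\<dots> = x i" using a by simp
  finally have "(\<Sum>j\<in>D. real_of_int (delta i j) * x j) = x i" .
  then show ?thesis using a unfolding Etor_def chr_def by simp
qed

lemma delta_freqs: "i \<in> D \<Longrightarrow> delta i \<in> freqs D"
  unfolding delta_def freqs_def by auto

lemma Rring_TP:
  assumes "finite D" "r \<in> Rring"
  shows "(\<lambda>x. complex_of_real (r (Etor D x))) \<in> TP D"
  using assms(2)
proof induction
  case (R_const c)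
  then show ?case by (simp add: TP_const)
next
  case (R_Re i)
  show ?case
  proof (cases "i \<in> D")
    case True
    then show ?thesis using TP_Re_chr[OF delta_freqs[OF True]] by (simp add: Etor_chr[OF True assms(1)])
  next
    case False
    then show ?thesis by (simp add: Etor_def TP_const)
  qed
next
  case (R_Im i)
  show ?case
  proof (cases "i \<in> D")
    case True
    then show ?thesis using TP_Im_chr[OF delta_freqs[OF True]] by (simp add: Etor_chr[OF True assms(1)])
  next
    case False
    then show ?thesis by (simp add: Etor_def TP_const)
  qed
next
  case (R_add f g)
  then show ?case using TP_add[OF R_add.IH] by simp
next
  case (R_mult f g)
  then show ?case using TP_mult[OF R_mult.IH] by simp
qed

lemma compact_Storus: "compact (Storus D)"
proof -
  define K where "K = (\<lambda>i. if i \<in> D then sphere (0::complex) 1 else {0})"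
  have "Storus D = PiE UNIV K"
    unfolding Storus_def K_def by (auto simp: PiE_iff) (metis (full_types) mem_sphere_0 singletonD)+
  moreover have "compactin (product_topology (\<lambda>_. euclidean) UNIV) (PiE UNIV K)"
    unfolding compactin_PiE by (auto simp: K_def)
  ultimately show ?thesis
    by (metis compactin_euclidean_iff euclidean_product_topology)
qed

lemma continuous_coord: "continuous_on S (\<lambda>z::nat \<Rightarrow> complex. z i)"
  by (rule continuous_on_subset[OF continuous_on_product_coordinates]) simp

lemma Rring_cont: "r \<in> Rring \<Longrightarrow> continuous_on S r"
proof (induction rule: Rring.induct)
  case (R_const c)
  then show ?case by (rule continuous_on_const)
next
  case (R_Re i)
  then show ?case by (rule continuous_on_Re[OF continuous_coord])
next
  case (R_Im i)
  then show ?case by (rule continuous_on_Im[OF continuous_coord])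
next
  case (R_add f g)
  then show ?case by (intro continuous_on_add) auto
next
  case (R_mult f g)
  then show ?case by (intro continuous_on_mult) auto
qed

lemma Rring_sep:
  assumes "x \<noteq> (y::nat \<Rightarrow> complex)"
  shows "\<exists>f\<in>Rring. f x \<noteq> f y"
proof -
  obtain i where i: "x i \<noteq> y i" using assms by (metis ext)
  show ?thesis
  proof (cases "Re (x i) = Re (y i)")
    case True
    then have "Im (x i) \<noteq> Im (y i)" using i complex_eqI by blast
    then show ?thesis using R_Im[of i] by (intro bexI[of _ "\<lambda>z. Im (z i)"]) auto
  next
    case False
    then show ?thesis using R_Re[of i] by (intro bexI[of _ "\<lambda>z. Re (z i)"]) auto
  qed
qed

lemma SW_ring: "function_ring_on Rring (Storus D)"
proof (unfold_locales)
  show "compact (Storus D)" by (rule compact_Storus)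
  show "\<And>f. f \<in> Rring \<Longrightarrow> continuous_on (Storus D) f" by (rule Rring_cont)
  show "\<And>f g. f \<in> Rring \<Longrightarrow> g \<in> Rring \<Longrightarrow> (\<lambda>x. f x + g x) \<in> Rring" by (rule R_add)
  show "\<And>f g. f \<in> Rring \<Longrightarrow> g \<in> Rring \<Longrightarrow> (\<lambda>x. f x * g x) \<in> Rring" by (rule R_mult)
  show "\<And>c. (\<lambda>_. c) \<in> Rring" by (rule R_const)
  show "\<And>x y. x \<in> Storus D \<Longrightarrow> y \<in> Storus D \<Longrightarrow> x \<noteq> y \<Longrightarrow> \<exists>f\<in>Rring. f x \<noteq> f y"
    by (rule Rring_sep)
qed

lemma SW_approx:
  assumes "continuous_on (Storus D) f" "e > 0"
  shows "\<exists>g\<in>Rring. \<forall>x\<in>Storus D. \<bar>f x - g x\<bar> < e"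
proof -
  interpret SW: function_ring_on Rring "Storus D" by (rule SW_ring)
  show ?thesis by (rule SW.Stone_Weierstrass_basic[OF assms])
qed

lemma Etor_Storus: "Etor D x \<in> Storus D"
proof -
  have "\<And>t::real. norm (exp (2 * pi * \<i> * complex_of_real t)) = 1"
    by (metis mult.commute mult.left_commute norm_exp_i_times of_real_mult of_real_numeral)
  then show ?thesis unfolding Etor_def Storus_def by simp
qed

definition clamp1 :: "real \<Rightarrow> real" where "clamp1 t = max (-1) (min 1 t)"

definition Gc :: "complex \<Rightarrow> real" where
  "Gc w = (let v = (if Im w \<ge> 0 then arccos (clamp1 (Re w)) / (2 * pi)
                    else 1 - arccos (clamp1 (Re w)) / (2 * pi))
           in if v < 1 then v else 0)"

lemma cont_arccos_clamp: "continuous_on UNIV (\<lambda>w::complex. arccos (clamp1 (Re w)))"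
  unfolding clamp1_def by (intro continuous_intros) auto

lemma Gc_meas: "Gc \<in> borel_measurable borel"
proof -
  have [measurable]: "(\<lambda>w::complex. arccos (clamp1 (Re w))) \<in> borel_measurable borel"
    by (rule borel_measurable_continuous_onI[OF cont_arccos_clamp])
  show ?thesis unfolding Gc_def Let_def by measurable
qed

lemma arccos_clamp_range: "0 \<le> arccos (clamp1 t) \<and> arccos (clamp1 t) \<le> pi"
  unfolding clamp1_def by (intro conjI arccos_lbound arccos_ubound) auto

lemma Gc_range: "Gc w \<in> {0..<1}"
  using arccos_clamp_range[of "Re w"] unfolding Gc_def Let_def
  by (auto simp: field_simps)

lemma Gc_exp:
  assumes "0 \<le> t" "t < 1"
  shows "Gc (exp (2 * pi * \<i> * complex_of_real t)) = t"
proof -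
  define w where "w = exp (2 * pi * \<i> * complex_of_real t)"
  have "2 * pi * \<i> * complex_of_real t = \<i> * complex_of_real (2 * pi * t)" by simp
  then have ReIm: "Re w = cos (2 * pi * t)" "Im w = sin (2 * pi * t)"
    unfolding w_def by (simp_all only: Re_exp Im_exp) simp_all
  have cl: "clamp1 (Re w) = Re w" unfolding clamp1_def ReIm by auto
  show ?thesis
  proof (cases "t \<le> 1/2")
    case True
    have "0 \<le> 2 * pi * t" "2 * pi * t \<le> pi" using assms True by (auto simp: field_simps)
    then have "sin (2 * pi * t) \<ge> 0" "arccos (cos (2 * pi * t)) = 2 * pi * t"
      by (auto intro: sin_ge_zero arccos_cos)
    then show ?thesis unfolding w_def[symmetric] Gc_def Let_def cl using ReIm assms by auto
  next
    case False
    have "pi < 2 * pi * t" "2 * pi * t < 2 * pi" using assms False by (auto simp: field_simps)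
    then have s: "sin (2 * pi * t) < 0" by (rule sin_lt_zero)
    have "0 \<le> 2 * pi - 2 * pi * t" "2 * pi - 2 * pi * t \<le> pi" using assms False by (auto simp: field_simps)
    then have "arccos (cos (2 * pi - 2 * pi * t)) = 2 * pi - 2 * pi * t" by (rule arccos_cos)
    then have a: "arccos (cos (2 * pi * t)) = 2 * pi - 2 * pi * t" by simp
    have "1 - (2 * pi - 2 * pi * t) / (2 * pi) = t" by (simp add: field_simps)
    then show ?thesis unfolding w_def[symmetric] Gc_def Let_def cl using ReIm assms s a by auto
  qed
qed

definition Ginv :: "nat set \<Rightarrow> (nat \<Rightarrow> complex) \<Rightarrow> (nat \<Rightarrow> real)" where
  "Ginv D z = (\<lambda>i. if i \<in> D then Gc (z i) else undefined)"

lemma Ginv_meas: "Ginv D \<in> measurable borel (torus D)"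
  unfolding torus_def Ginv_def
proof (rule measurable_PiM_single')
  fix i assume "i \<in> D"
  have "(\<lambda>z::nat \<Rightarrow> complex. Gc (z i)) \<in> measurable borel UI"
    using Gc_range by (intro measurable_restrict_space2) (auto intro: measurable_compose[OF measurable_product_coordinates Gc_meas])
  then show "(\<lambda>z. if i \<in> D then Gc (z i) else undefined) \<in> measurable borel UI"
    using \<open>i \<in> D\<close> by simp
qed (insert Gc_range, auto simp: space_restrict_space)

lemma Ginv_Etor: "x \<in> space (torus D) \<Longrightarrow> Ginv D (Etor D x) = x"
  unfolding space_torus Ginv_def Etor_def
  by (auto simp: PiE_iff Gc_exp[simplified] extensional_def fun_eq_iff)

lemma Etor_meas[measurable]: "Etor D \<in> borel_measurable (torus D)"
proof (rule measurable_coordinatewise_then_product)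
  fix i
  show "(\<lambda>x. Etor D x i) \<in> borel_measurable (torus D)"
    unfolding Etor_def by (cases "i \<in> D") auto
qed

lemma sets_torus_gen:
  "sets (torus D) \<subseteq> sigma_sets (space (torus D)) {Etor D -` C \<inter> space (torus D) | C. closed C}"
proof
  let ?\<Omega> = "space (torus D)"
  have "sets (vimage_algebra ?\<Omega> (Etor D) borel) = sets (vimage_algebra ?\<Omega> (Etor D) (sigma UNIV (Collect closed)))"
    by (simp add: borel_eq_closed)
  also have "\<dots> = sets (sigma ?\<Omega> {Etor D -` A \<inter> ?\<Omega> | A. A \<in> Collect closed})"
    by (subst vimage_algebra_sigma) auto
  also have "\<dots> = sigma_sets ?\<Omega> {Etor D -` A \<inter> ?\<Omega> | A. A \<in> Collect closed}"
    by (rule sets_measure_of) auto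
  finally have eq: "sets (vimage_algebra ?\<Omega> (Etor D) borel) = sigma_sets ?\<Omega> {Etor D -` C \<inter> ?\<Omega> | C. closed C}"
    by simp
  fix B assume B: "B \<in> sets (torus D)"
  have "Ginv D -` B \<inter> space borel \<in> sets borel" by (rule measurable_sets[OF Ginv_meas B])
  then have "Etor D -` (Ginv D -` B \<inter> space borel) \<inter> ?\<Omega> \<in> sets (vimage_algebra ?\<Omega> (Etor D) borel)"
    by (rule in_vimage_algebra)
  moreover have "Etor D -` (Ginv D -` B \<inter> space borel) \<inter> ?\<Omega> = B"
    using sets.sets_into_space[OF B] Ginv_Etor by auto
  ultimately show "B \<in> sigma_sets ?\<Omega> {Etor D -` C \<inter> ?\<Omega> | C. closed C}"
    using eq by simp
qed

lemma cont_zero: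
  assumes D: "finite D" and h: "integrable (torus D) h"
    and coeff: "\<And>k. k \<in> freqs D \<Longrightarrow> fourier_coeff D h k = 0"
    and f: "continuous_on UNIV f" and B: "\<And>z. \<bar>f z\<bar> \<le> B"
  shows "(\<integral>x. h x * complex_of_real (f (Etor D x)) \<partial>torus D) = 0"
proof -
  let ?M = "torus D"
  have fm[measurable]: "f \<in> borel_measurable borel" by (rule borel_measurable_continuous_onI[OF f])
  have int_f: "integrable ?M (\<lambda>x. h x * complex_of_real (f (Etor D x)))"
    by (rule integrable_bounded_mult[OF h, where B=B]) (auto simp: B)
  define I where "I = (\<integral>x. h x * complex_of_real (f (Etor D x)) \<partial>?M)"
  define N where "N = (\<integral>x. norm (h x) \<partial>?M)"
  have N0: "N \<ge> 0" unfolding N_def by simp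
  have bound: "norm I \<le> e * N" if e: "e > 0" for e
  proof -
    have cS: "continuous_on (Storus D) f" using f continuous_on_subset by blast
    obtain r where r: "r \<in> Rring" "\<forall>z\<in>Storus D. \<bar>f z - r z\<bar> < e" using SW_approx[OF cS e] by blast
    define \<phi> where "\<phi> = (\<lambda>x. complex_of_real (r (Etor D x)))"
    have \<phi>TP: "\<phi> \<in> TP D" unfolding \<phi>_def by (rule Rring_TP[OF D r(1)])
    obtain B\<phi> where B\<phi>: "\<forall>x. norm (\<phi> x) \<le> B\<phi>" using TP_bounded[OF \<phi>TP] by auto
    have int_\<phi>: "integrable ?M (\<lambda>x. h x * \<phi> x)"
      by (rule integrable_bounded_mult[OF h TP_meas[OF \<phi>TP]]) (use B\<phi> in auto)
    have z: "(\<integral>x. h x * \<phi> x \<partial>?M) = 0" by (rule TP_integral_zero[OF h coeff \<phi>TP])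
    have "I = (\<integral>x. h x * complex_of_real (f (Etor D x)) - h x * \<phi> x \<partial>?M)"
      using int_f int_\<phi> z by (simp add: I_def)
    also have "norm \<dots> \<le> (\<integral>x. norm (h x * complex_of_real (f (Etor D x)) - h x * \<phi> x) \<partial>?M)"
      by (rule integral_norm_bound)
    also have "\<dots> \<le> (\<integral>x. e * norm (h x) \<partial>?M)"
    proof (rule integral_mono)
      show "integrable ?M (\<lambda>x. norm (h x * complex_of_real (f (Etor D x)) - h x * \<phi> x))"
        using int_f int_\<phi> by auto
      show "integrable ?M (\<lambda>x. e * norm (h x))" using h by auto
      fix x
      have eq: "h x * complex_of_real (f (Etor D x)) - h x * \<phi> x = h x * complex_of_real (f (Etor D x) - r (Etor D x))"
        unfolding \<phi>_def by (simp add: algebra_simps)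
      have "\<bar>f (Etor D x) - r (Etor D x)\<bar> \<le> e" using r(2) Etor_Storus[of D x] by force
      then have "norm (h x) * \<bar>f (Etor D x) - r (Etor D x)\<bar> \<le> norm (h x) * e"
        by (simp add: mult_left_mono)
      then show "norm (h x * complex_of_real (f (Etor D x)) - h x * \<phi> x) \<le> e * norm (h x)"
        unfolding eq norm_mult norm_of_real by (metis mult.commute)
    qed
    also have "\<dots> = e * N" unfolding N_def by simp
    finally show ?thesis .
  qed
  have "norm I \<le> 0"
  proof (rule field_le_epsilon)
    fix \<epsilon> :: real assume \<epsilon>: "\<epsilon> > 0"
    have "\<epsilon> / (N + 1) > 0" using \<epsilon> N0 by simp
    then have "norm I \<le> (\<epsilon> / (N + 1)) * N" by (rule bound)
    also have "\<dots> \<le> \<epsilon>" using \<epsilon> N0 by (simp add: field_simps)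
    finally show "norm I \<le> 0 + \<epsilon>" by simp
  qed
  then show ?thesis unfolding I_def by simp
qed

lemma closed_zero:
  assumes D: "finite D" and h: "integrable (torus D) h"
    and coeff: "\<And>k. k \<in> freqs D \<Longrightarrow> fourier_coeff D h k = 0"
    and C: "closed C"
  shows "(\<integral>x. indicator (Etor D -` C \<inter> space (torus D)) x *\<^sub>R h x \<partial>torus D) = 0"
proof (cases "C = {}")
  case True
  then show ?thesis by simp
next
  case False
  let ?M = "torus D"
  define fn where "fn n z = max 0 (1 - real n * infdist z C)" for n z
  have cont: "continuous_on UNIV (fn n)" for n
    unfolding fn_def by (intro continuous_intros)
  have fb: "\<bar>fn n z\<bar> \<le> 1" for n z
    using infdist_nonneg[of z C] unfolding fn_def by (auto simp: mult_nonneg_nonneg)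
  have zero: "(\<integral>x. h x * complex_of_real (fn n (Etor D x)) \<partial>?M) = 0" for n
    by (rule cont_zero[OF D h coeff cont fb])
  have lim: "(\<lambda>n. fn n z) \<longlonglongrightarrow> indicator C z" for z
  proof (cases "z \<in> C")
    case True
    then have "infdist z C = 0" by simp
    then show ?thesis using True by (simp add: fn_def)
  next
    case False
    then have d: "infdist z C > 0" using infdist_pos_not_in_closed[OF C \<open>C \<noteq> {}\<close>] by blast
    obtain N :: nat where N: "1 / infdist z C < real N" using reals_Archimedean2 by blast
    have "eventually (\<lambda>n. fn n z = 0) sequentially"
    proof (rule eventually_sequentiallyI[of N])
      fix n assume "N \<le> n"
      then have "1 / infdist z C < real n" using N by (meson less_le_trans of_nat_le_iff)
      then have "1 < real n * infdist z C" using d by (simp add: field_simps)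
      then show "fn n z = 0" unfolding fn_def by simp
    qed
    then have "(\<lambda>n. fn n z) \<longlonglongrightarrow> 0" by (rule tendsto_eventually)
    then show ?thesis using False by simp
  qed
  have Cb[measurable]: "C \<in> sets borel" using C by (rule borel_closed)
  have fm[measurable]: "fn n \<in> borel_measurable borel" for n
    by (rule borel_measurable_continuous_onI[OF cont])
  have "(\<lambda>n. (\<integral>x. h x * complex_of_real (fn n (Etor D x)) \<partial>?M))
      \<longlonglongrightarrow> (\<integral>x. h x * complex_of_real (indicator C (Etor D x)) \<partial>?M)"
  proof (rule integral_dominated_convergence[where w="\<lambda>x. norm (h x)"])
    show "(\<lambda>x. h x * complex_of_real (indicator C (Etor D x))) \<in> borel_measurable ?M"
      using borel_measurable_integrable[OF h] C by measurable
    show "(\<lambda>x. h x * complex_of_real (fn n (Etor D x))) \<in> borel_measurable ?M" for n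
      using borel_measurable_integrable[OF h] by measurable
    show "integrable ?M (\<lambda>x. norm (h x))" using h by simp
    show "AE x in ?M. (\<lambda>n. h x * complex_of_real (fn n (Etor D x))) \<longlonglongrightarrow> h x * complex_of_real (indicator C (Etor D x))"
      by (intro AE_I2 tendsto_mult tendsto_const tendsto_of_real lim)
    show "AE x in ?M. norm (h x * complex_of_real (fn n (Etor D x))) \<le> norm (h x)" for n
    proof (rule AE_I2)
      fix x
      have "norm (h x) * \<bar>fn n (Etor D x)\<bar> \<le> norm (h x) * 1" using fb by (intro mult_left_mono) auto
      then show "norm (h x * complex_of_real (fn n (Etor D x))) \<le> norm (h x)"
        by (simp add: norm_mult)
    qed
  qed
  then have "(\<integral>x. h x * complex_of_real (indicator C (Etor D x)) \<partial>?M) = 0"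
    unfolding zero by (simp add: LIMSEQ_const_iff)
  moreover have "(\<integral>x. indicator (Etor D -` C \<inter> space ?M) x *\<^sub>R h x \<partial>?M)
      = (\<integral>x. h x * complex_of_real (indicator C (Etor D x)) \<partial>?M)"
    by (rule Bochner_Integration.integral_cong) (auto simp: indicator_def)
  ultimately show ?thesis by simp
qed

theorem fourier_unique:
  assumes D: "finite D" and h: "integrable (torus D) h"
    and coeff: "\<And>k. k \<in> freqs D \<Longrightarrow> fourier_coeff D h k = 0"
  shows "AE x in torus D. h x = 0"
proof -
  let ?M = "torus D"
  let ?\<Omega> = "space ?M"
  let ?G = "{Etor D -` C \<inter> ?\<Omega> | C. closed C}"
  have Gsets: "?G \<subseteq> sets ?M"
    using measurable_sets[OF Etor_meas borel_closed] by auto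
  have sig_sub: "sigma_sets ?\<Omega> ?G \<subseteq> sets ?M"
    by (rule sets.sigma_sets_subset[OF Gsets])
  have int0: "(\<integral>x. h x \<partial>?M) = 0"
    using coeff[OF freqs_zero] by (simp add: fourier_coeff_def)
  have P: "(\<integral>x. indicator A x *\<^sub>R h x \<partial>?M) = 0" if A: "A \<in> sets ?M" for A
  proof -
    have IS: "Int_stable ?G"
      unfolding Int_stable_def
    proof safe
      fix C1 C2 :: "(nat \<Rightarrow> complex) set" assume "closed C1" "closed C2"
      then show "\<exists>C. (Etor D -` C1 \<inter> ?\<Omega>) \<inter> (Etor D -` C2 \<inter> ?\<Omega>) = Etor D -` C \<inter> ?\<Omega> \<and> closed C"
        by (intro exI[of _ "C1 \<inter> C2"]) auto
    qed
    have GP: "?G \<subseteq> Pow ?\<Omega>" by auto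
    have "A \<in> sigma_sets ?\<Omega> ?G" using sets_torus_gen A by blast
    with IS GP show ?thesis
    proof (induction rule: sigma_sets_induct_disjoint)
      case (basic A)
      then obtain C where "closed C" "A = Etor D -` C \<inter> ?\<Omega>" by auto
      then show ?case using closed_zero[OF D h coeff] by simp
    next
      case empty
      then show ?case by simp
    next
      case (compl A)
      have As: "A \<in> sets ?M" using compl(1) sig_sub by blast
      have "(\<integral>x. indicator (?\<Omega> - A) x *\<^sub>R h x \<partial>?M) = (\<integral>x. h x - indicator A x *\<^sub>R h x \<partial>?M)"
        by (rule Bochner_Integration.integral_cong) (auto simp: indicator_def)
      also have "\<dots> = (\<integral>x. h x \<partial>?M) - (\<integral>x. indicator A x *\<^sub>R h x \<partial>?M)"
        using h integrable_mult_indicator[OF As h] by simp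
      also have "\<dots> = 0" using int0 compl(2) by simp
      finally show ?case .
    next
      case (union A)
      have As: "A i \<in> sets ?M" for i using union(2) sig_sub by blast
      have Us: "(\<Union>i. A i) \<in> sets ?M" using As by blast
      have "(LINT x:(\<Union>i. A i)|?M. h x) = (\<Sum>i. (LINT x:(A i)|?M. h x))"
      proof (rule lebesgue_integral_countable_add)
        show "\<And>i. A i \<in> sets ?M" by (rule As)
        show "\<And>i j. i \<noteq> j \<Longrightarrow> A i \<inter> A j = {}" using union(1) unfolding disjoint_family_on_def by auto
        show "set_integrable ?M (\<Union>i. A i) h"
          unfolding set_integrable_def by (rule integrable_mult_indicator[OF Us h])
      qed
      also have "\<dots> = 0" using union(3) by (simp add: set_lebesgue_integral_def)
      finally show ?case by (simp add: set_lebesgue_integral_def)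
    qed
  qed
  have "AE x in ?M. h x = (\<lambda>_. 0) x"
  proof (rule TP.density_unique_banach[OF h])
    show "integrable ?M (\<lambda>_. 0::complex)" by simp
    fix A assume "A \<in> sets ?M"
    then show "set_lebesgue_integral ?M A h = set_lebesgue_integral ?M A (\<lambda>_. 0)"
      using P by (simp add: set_lebesgue_integral_def)
  qed
  then show ?thesis by simp
qed

lemma integrable_count_space_bound:
  fixes g :: "'i \<Rightarrow> 'b::{banach, second_countable_topology}"
  assumes "integrable (count_space K) (c :: 'i \<Rightarrow> complex)"
    and "\<And>k. k \<in> K \<Longrightarrow> norm (g k) \<le> B * norm (c k)"
  shows "integrable (count_space K) g"
proof (rule Bochner_Integration.integrable_bound[where f="\<lambda>k. B * norm (c k)"])
  show "integrable (count_space K) (\<lambda>k. B * norm (c k))" using assms(1) by simp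
  show "g \<in> borel_measurable (count_space K)" by simp
  show "AE x in count_space K. norm (g x) \<le> norm (B * norm (c x))"
    using assms(2) by (intro AE_I2) (auto intro: order.trans[OF _ abs_ge_self])
qed

lemma summable_to_integrable:
  fixes c :: "'i \<Rightarrow> complex"
  assumes "(\<lambda>k. norm (c k)) summable_on K"
  shows "integrable (count_space K) c"
  using assms abs_summable_equivalent[of c K] unfolding Infinite_Set_Sum.abs_summable_on_def by simp

lemma integral_count_infsum:
  fixes g :: "'i \<Rightarrow> complex"
  assumes "integrable (count_space K) g"
  shows "(\<integral>k. g k \<partial>count_space K) = (\<Sum>\<^sub>\<infinity>k\<in>K. g k)"
  using infsetsum_infsum[of g K] assms unfolding Infinite_Set_Sum.abs_summable_on_def infsetsum_def by simp

lemma integral_infsum_swap: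
  fixes c :: "'i \<Rightarrow> complex" and \<phi> :: "'i \<Rightarrow> 'a \<Rightarrow> complex"
  assumes N: "finite_measure N" and K: "countable K"
    and c: "(\<lambda>k. norm (c k)) summable_on K"
    and \<phi>m: "\<And>k. k \<in> K \<Longrightarrow> \<phi> k \<in> borel_measurable N"
    and \<phi>b: "\<And>k x. k \<in> K \<Longrightarrow> x \<in> space N \<Longrightarrow> norm (\<phi> k x) \<le> 1"
  shows "integrable N (\<lambda>x. \<Sum>\<^sub>\<infinity>k\<in>K. c k * \<phi> k x)"
    and "(\<integral>x. (\<Sum>\<^sub>\<infinity>k\<in>K. c k * \<phi> k x) \<partial>N) = (\<Sum>\<^sub>\<infinity>k\<in>K. c k * (\<integral>x. \<phi> k x \<partial>N))"
proof -
  interpret N: finite_measure N by fact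
  interpret P: pair_sigma_finite "count_space K" N
    by (simp add: pair_sigma_finite_def sigma_finite_measure_count_space_countable[OF K] N.sigma_finite_measure_axioms)
  have ci: "integrable (count_space K) c" by (rule summable_to_integrable[OF c])
  let ?F = "\<lambda>k x. c k * \<phi> k x"
  have Fm: "(\<lambda>p. c (fst p) * \<phi> (fst p) (snd p)) \<in> borel_measurable (count_space K \<Otimes>\<^sub>M N)"
  proof (rule measurable_compose_countable'[where g=fst and I=K and f="\<lambda>k p. c k * \<phi> k (snd p)"])
    fix k assume "k \<in> K"
    have "(\<lambda>p. \<phi> k (snd p)) \<in> borel_measurable (count_space K \<Otimes>\<^sub>M N)"
      by (rule measurable_compose[OF measurable_snd \<phi>m[OF \<open>k \<in> K\<close>]])
    then show "(\<lambda>p. c k * \<phi> k (snd p)) \<in> borel_measurable (count_space K \<Otimes>\<^sub>M N)" by simp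
  qed (auto simp: K)
  have \<phi>i: "integrable N (\<phi> k)" if "k \<in> K" for k
    by (rule N.integrable_const_bound[where B=1]) (use \<phi>b that \<phi>m in auto)
  have Fi: "integrable (count_space K \<Otimes>\<^sub>M N) (case_prod ?F)"
  proof (rule P.Fubini_integrable)
    show "case_prod ?F \<in> borel_measurable (count_space K \<Otimes>\<^sub>M N)" using Fm by (simp add: case_prod_beta')
    show "integrable (count_space K) (\<lambda>k. \<integral>x. norm (case_prod ?F (k, x)) \<partial>N)"
    proof (rule integrable_count_space_bound[OF ci, where B="measure N (space N)"])
      fix k assume k: "k \<in> K"
      have "(\<integral>x. norm (c k * \<phi> k x) \<partial>N) \<le> (\<integral>x. norm (c k) \<partial>N)"
      proof (rule integral_mono)
        show "integrable N (\<lambda>x. norm (c k * \<phi> k x))" using \<phi>i[OF k] by simp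
        show "integrable N (\<lambda>x. norm (c k))" by simp
        fix x assume "x \<in> space N"
        then have "norm (c k) * norm (\<phi> k x) \<le> norm (c k) * 1" using \<phi>b[OF k] by (intro mult_left_mono) auto
        then show "norm (c k * \<phi> k x) \<le> norm (c k)" by (simp add: norm_mult)
      qed
      then show "norm (\<integral>x. norm (case_prod ?F (k, x)) \<partial>N) \<le> measure N (space N) * norm (c k)"
        by (simp add: mult.commute)
    qed
    show "AE k in count_space K. integrable N (\<lambda>x. case_prod ?F (k, x))"
      using \<phi>i by (auto intro!: AE_I2)
  qed
  have eq1: "(\<integral>k. c k * \<phi> k x \<partial>count_space K) = (\<Sum>\<^sub>\<infinity>k\<in>K. c k * \<phi> k x)" if x: "x \<in> space N" for x
  proof (rule integral_count_infsum, rule integrable_count_space_bound[OF ci, where B=1])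
    fix k assume "k \<in> K"
    then have "norm (c k) * norm (\<phi> k x) \<le> norm (c k) * 1" using \<phi>b x by (intro mult_left_mono) auto
    then show "norm (c k * \<phi> k x) \<le> 1 * norm (c k)" by (simp add: norm_mult)
  qed
  have eq2: "(\<integral>k. (\<integral>x. c k * \<phi> k x \<partial>N) \<partial>count_space K) = (\<Sum>\<^sub>\<infinity>k\<in>K. c k * (\<integral>x. \<phi> k x \<partial>N))"
  proof -
    have "(\<integral>k. (\<integral>x. c k * \<phi> k x \<partial>N) \<partial>count_space K) = (\<integral>k. c k * (\<integral>x. \<phi> k x \<partial>N) \<partial>count_space K)"
      by simp
    also have "\<dots> = (\<Sum>\<^sub>\<infinity>k\<in>K. c k * (\<integral>x. \<phi> k x \<partial>N))"
    proof (rule integral_count_infsum, rule integrable_count_space_bound[OF ci, where B="measure N (space N)"])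
      fix k assume k: "k \<in> K"
      have "norm (\<integral>x. \<phi> k x \<partial>N) \<le> (\<integral>x. norm (\<phi> k x) \<partial>N)" by (rule integral_norm_bound)
      also have "\<dots> \<le> (\<integral>x. 1 \<partial>N)"
        using \<phi>i[OF k] \<phi>b[OF k] by (intro integral_mono) auto
      also have "\<dots> = measure N (space N)" by simp
      finally have "norm (c k) * norm (\<integral>x. \<phi> k x \<partial>N) \<le> norm (c k) * measure N (space N)"
        by (intro mult_left_mono) auto
      then show "norm (c k * (\<integral>x. \<phi> k x \<partial>N)) \<le> measure N (space N) * norm (c k)"
        by (simp add: norm_mult mult.commute)
    qed
    finally show ?thesis .
  qed
  have "integrable N (\<lambda>x. \<integral>k. c k * \<phi> k x \<partial>count_space K)"
    using P.integrable_snd[OF Fi] by simp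
  then show int: "integrable N (\<lambda>x. \<Sum>\<^sub>\<infinity>k\<in>K. c k * \<phi> k x)"
    by (rule Bochner_Integration.integrable_cong[THEN iffD1, rotated 2]) (auto simp: eq1)
  have "(\<integral>x. (\<Sum>\<^sub>\<infinity>k\<in>K. c k * \<phi> k x) \<partial>N) = (\<integral>x. (\<integral>k. c k * \<phi> k x \<partial>count_space K) \<partial>N)"
    by (rule Bochner_Integration.integral_cong) (auto simp: eq1)
  also have "\<dots> = (\<integral>k. (\<integral>x. c k * \<phi> k x \<partial>N) \<partial>count_space K)"
    using P.Fubini_integral[OF Fi] by simp
  also have "\<dots> = (\<Sum>\<^sub>\<infinity>k\<in>K. c k * (\<integral>x. \<phi> k x \<partial>N))" by (rule eq2)
  finally show "(\<integral>x. (\<Sum>\<^sub>\<infinity>k\<in>K. c k * \<phi> k x) \<partial>N) = (\<Sum>\<^sub>\<infinity>k\<in>K. c k * (\<integral>x. \<phi> k x \<partial>N))" .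
qed

lemma countable_freqs: "finite D \<Longrightarrow> countable (freqs D)"
proof -
  assume D: "finite D"
  have "inj_on (\<lambda>k. restrict k D) (freqs D)"
    unfolding inj_on_def freqs_def restrict_def by (auto simp: fun_eq_iff) (metis)
  moreover have "(\<lambda>k. restrict k D) ` freqs D \<subseteq> PiE D (\<lambda>_. UNIV :: int set)" by auto
  moreover have "countable (PiE D (\<lambda>_. UNIV :: int set))" using D by (simp add: countable_PiE)
  ultimately show ?thesis by (meson countable_image_inj_on countable_subset)
qed

lemma abs_summable_mult_bounded:
  fixes c a :: "'i \<Rightarrow> complex"
  assumes "(\<lambda>k. norm (c k)) summable_on K" "\<And>k. k \<in> K \<Longrightarrow> norm (a k) \<le> 1"
  shows "(\<lambda>k. norm (c k * a k)) summable_on K"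
proof (rule Infinite_Sum.abs_summable_on_comparison_test[where g=c])
  show "(\<lambda>k. norm (c k)) summable_on K" by fact
  fix k assume "k \<in> K"
  then have "norm (c k) * norm (a k) \<le> norm (c k) * 1" using assms(2) by (intro mult_left_mono) auto
  then show "norm (c k * a k) \<le> norm (c k)" by (simp add: norm_mult)
qed

lemma summable_mult_bounded:
  fixes c a :: "'i \<Rightarrow> complex"
  assumes "(\<lambda>k. norm (c k)) summable_on K" "\<And>k. k \<in> K \<Longrightarrow> norm (a k) \<le> 1"
  shows "(\<lambda>k. c k * a k) summable_on K"
  by (rule abs_summable_summable[OF abs_summable_mult_bounded[OF assms]])

definition ser :: "nat set \<Rightarrow> ((nat \<Rightarrow> int) \<Rightarrow> complex) \<Rightarrow> (nat \<Rightarrow> real) \<Rightarrow> complex" where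
  "ser D c x = (\<Sum>\<^sub>\<infinity>k\<in>freqs D. c k * chr D k x)"

lemma ser_integrable:
  assumes D: "finite D" and c: "(\<lambda>k. norm (c k)) summable_on freqs D"
  shows "integrable (torus D) (ser D c)"
  unfolding ser_def
  by (rule integral_infsum_swap(1)[OF _ countable_freqs[OF D] c]) (auto intro: TP.finite_measure_axioms)

lemma fourier_coeff_ser:
  assumes D: "finite D" and c: "(\<lambda>k. norm (c k)) summable_on freqs D" and m: "m \<in> freqs D"
  shows "fourier_coeff D (ser D c) m = c m"
proof -
  have "fourier_coeff D (ser D c) m = (\<integral>x. ser D c x * chr D (- m) x \<partial>torus D)"
    by (rule fourier_coeff_chr)
  also have "\<dots> = (\<integral>x. (\<Sum>\<^sub>\<infinity>k\<in>freqs D. c k * chr D (k + - m) x) \<partial>torus D)"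
  proof (rule Bochner_Integration.integral_cong[OF refl])
    fix x
    have "ser D c x * chr D (- m) x = (\<Sum>\<^sub>\<infinity>k\<in>freqs D. c k * chr D k x * chr D (- m) x)"
      unfolding ser_def by (rule infsum_cmult_left[symmetric]) (rule summable_mult_bounded[OF c], simp)
    also have "\<dots> = (\<Sum>\<^sub>\<infinity>k\<in>freqs D. c k * chr D (k + - m) x)"
      by (rule infsum_cong) (simp add: mult.assoc chr_mult)
    finally show "ser D c x * chr D (- m) x = (\<Sum>\<^sub>\<infinity>k\<in>freqs D. c k * chr D (k + - m) x)" .
  qed
  also have "\<dots> = (\<Sum>\<^sub>\<infinity>k\<in>freqs D. c k * (\<integral>x. chr D (k + - m) x \<partial>torus D))"
    by (rule integral_infsum_swap(2)[OF _ countable_freqs[OF D] c]) (auto intro: TP.finite_measure_axioms)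
  also have "\<dots> = (\<Sum>\<^sub>\<infinity>k\<in>freqs D. if k = m then c k else 0)"
  proof (rule infsum_cong)
    fix k assume k: "k \<in> freqs D"
    have "(\<forall>i\<in>D. (k + - m) i = 0) \<longleftrightarrow> k = m"
      using k m unfolding freqs_def by (auto simp: fun_eq_iff)
    then show "c k * (\<integral>x. chr D (k + - m) x \<partial>torus D) = (if k = m then c k else 0)"
      by (simp add: torus_integral_chr[OF D])
  qed
  also have "\<dots> = (\<Sum>\<^sub>\<infinity>k\<in>{m}. c k)"
    by (rule infsum_cong_neutral) (use m in auto)
  also have "\<dots> = c m" by simp
  finally show ?thesis .
qed

definition sser :: "nat set \<Rightarrow> ((nat \<Rightarrow> int) \<Rightarrow> complex) \<Rightarrow> (nat \<Rightarrow> int) set \<Rightarrow> (nat \<Rightarrow> real) \<Rightarrow> complex" where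
  "sser D c K x = (\<Sum>\<^sub>\<infinity>k\<in>K. c k * chr D k x)"

lemma supp_freqs: "k \<in> freqs D \<Longrightarrow> supp k \<subseteq> D"
  unfolding supp_def freqs_def by auto

lemma summable_sub:
  assumes c: "(\<lambda>k. norm (c k)) summable_on freqs D" and K: "K \<subseteq> freqs D"
  shows "(\<lambda>k. c k * chr D k x) summable_on K"
proof -
  have "(\<lambda>k. norm (c k)) summable_on K"
    using c K by (rule summable_on_subset_banach)
  then show ?thesis by (rule summable_mult_bounded) simp
qed

lemma sser_Un:
  assumes c: "(\<lambda>k. norm (c k)) summable_on freqs D" and "A \<subseteq> freqs D" "B \<subseteq> freqs D" "A \<inter> B = {}"
  shows "sser D c (A \<union> B) x = sser D c A x + sser D c B x"
  unfolding sser_def using assms by (intro infsum_Un_disjoint summable_sub) auto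

lemma sser_UN:
  assumes c: "(\<lambda>k. norm (c k)) summable_on freqs D" and V: "finite V"
    and K: "\<And>v. v \<in> V \<Longrightarrow> K v \<subseteq> freqs D"
    and disj: "\<And>v w. v \<in> V \<Longrightarrow> w \<in> V \<Longrightarrow> v \<noteq> w \<Longrightarrow> K v \<inter> K w = {}"
  shows "(\<Sum>v\<in>V. sser D c (K v) x) = sser D c (\<Union>v\<in>V. K v) x"
  using V K disj
proof (induction V rule: finite_induct)
  case empty
  then show ?case by (simp add: sser_def)
next
  case (insert v V)
  have IH: "(\<Sum>w\<in>V. sser D c (K w) x) = sser D c (\<Union>w\<in>V. K w) x"
    using insert by (intro insert.IH) auto
  have dj: "K v \<inter> K w = {}" if "w \<in> V" for w
    using insert.prems(2)[of v w] insert.hyps(2) that by auto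
  have U: "sser D c (K v) x + sser D c (\<Union>w\<in>V. K w) x = sser D c (K v \<union> (\<Union>w\<in>V. K w)) x"
  proof (rule sser_Un[symmetric, OF c])
    show "K v \<inter> (\<Union>w\<in>V. K w) = {}" using dj by blast
  qed (use insert in auto)
  show ?case using insert.hyps IH U by simp
qed

lemma chr_merge:
  assumes D: "finite D" and u: "u \<subseteq> D"
  shows "chr D k (\<lambda>i. if i \<in> u then x i else y i) = chr u k x * chr (D - u) k y"
proof -
  have "(\<Sum>i\<in>D. real_of_int (k i) * (if i \<in> u then x i else y i))
      = (\<Sum>i\<in>D - u. real_of_int (k i) * (if i \<in> u then x i else y i)) + (\<Sum>i\<in>u. real_of_int (k i) * (if i \<in> u then x i else y i))"
    by (rule sum.subset_diff[OF u D])
  also have "\<dots> = (\<Sum>i\<in>D - u. real_of_int (k i) * y i) + (\<Sum>i\<in>u. real_of_int (k i) * x i)"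
    by (intro arg_cong2[where f="(+)"] sum.cong) auto
  finally show ?thesis unfolding chr_def by (simp add: exp_add[symmetric] distrib_left algebra_simps)
qed

lemma chr_vanish:
  assumes D: "finite D" and u: "u \<subseteq> D" and k: "\<forall>i\<in>D - u. k i = 0"
  shows "chr u k x = chr D k x"
proof -
  have "(\<Sum>i\<in>D. real_of_int (k i) * x i) = (\<Sum>i\<in>D - u. real_of_int (k i) * x i) + (\<Sum>i\<in>u. real_of_int (k i) * x i)"
    by (rule sum.subset_diff[OF u D])
  also have "(\<Sum>i\<in>D - u. real_of_int (k i) * x i) = 0" using k by simp
  finally show ?thesis unfolding chr_def by simp
qed

lemma proj_ser:
  assumes D: "finite D" and u: "u \<subseteq> D" and c: "(\<lambda>k. norm (c k)) summable_on freqs D"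
  shows "proj D u (ser D c) x = sser D c {k \<in> freqs D. supp k \<subseteq> u} x"
proof -
  have Du: "finite (D - u)" using D by simp
  have c': "(\<lambda>k. norm (c k * chr u k x)) summable_on freqs D"
    using c by (simp add: norm_mult)
  have "proj D u (ser D c) x = (\<integral>y. (\<Sum>\<^sub>\<infinity>k\<in>freqs D. (c k * chr u k x) * chr (D - u) k y) \<partial>torus (D - u))"
    unfolding proj_def ser_def
    by (intro Bochner_Integration.integral_cong refl infsum_cong) (simp add: chr_merge[OF D u] mult.assoc)
  also have "\<dots> = (\<Sum>\<^sub>\<infinity>k\<in>freqs D. (c k * chr u k x) * (\<integral>y. chr (D - u) k y \<partial>torus (D - u)))"
    by (rule integral_infsum_swap(2)[OF _ countable_freqs[OF D] c']) (auto intro: TP.finite_measure_axioms)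
  also have "\<dots> = (\<Sum>\<^sub>\<infinity>k\<in>freqs D. if supp k \<subseteq> u then c k * chr D k x else 0)"
  proof (rule infsum_cong)
    fix k assume k: "k \<in> freqs D"
    have "(\<forall>i\<in>D - u. k i = 0) \<longleftrightarrow> supp k \<subseteq> u"
      using k unfolding freqs_def supp_def by auto
    then show "(c k * chr u k x) * (\<integral>y. chr (D - u) k y \<partial>torus (D - u)) = (if supp k \<subseteq> u then c k * chr D k x else 0)"
      using chr_vanish[OF D u, of k x] by (auto simp: torus_integral_chr[OF Du])
  qed
  also have "\<dots> = sser D c {k \<in> freqs D. supp k \<subseteq> u} x"
    unfolding sser_def by (rule infsum_cong_neutral) auto
  finally show ?thesis .
qed

lemma anova_ser:
  assumes D: "finite D" and c: "(\<lambda>k. norm (c k)) summable_on freqs D"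
  shows "finite u \<Longrightarrow> u \<subseteq> D \<Longrightarrow> anova D (ser D c) u x = sser D c {k \<in> freqs D. supp k = u} x"
proof (induction u rule: finite_psubset_induct)
  case (psubset u)
  have "anova D (ser D c) u x = proj D u (ser D c) x - (\<Sum>v\<in>Pow u - {u}. anova D (ser D c) v x)"
    using psubset.hyps(1) by (subst anova.simps) simp
  also have "(\<Sum>v\<in>Pow u - {u}. anova D (ser D c) v x) = (\<Sum>v\<in>Pow u - {u}. sser D c {k \<in> freqs D. supp k = v} x)"
  proof (rule sum.cong[OF refl])
    fix v assume v: "v \<in> Pow u - {u}"
    then have "v \<subset> u" by auto
    moreover have "finite v" "v \<subseteq> D" using v psubset by (auto intro: finite_subset)
    ultimately show "anova D (ser D c) v x = sser D c {k \<in> freqs D. supp k = v} x"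
      using psubset.IH by blast
  qed
  also have "\<dots> = sser D c (\<Union>v\<in>Pow u - {u}. {k \<in> freqs D. supp k = v}) x"
    using psubset.hyps(1) by (intro sser_UN c) auto
  also have "(\<Union>v\<in>Pow u - {u}. {k \<in> freqs D. supp k = v}) = {k \<in> freqs D. supp k \<subset> u}"
    by auto
  also have "proj D u (ser D c) x = sser D c {k \<in> freqs D. supp k \<subseteq> u} x"
    by (rule proj_ser[OF D psubset.prems c])
  also have "{k \<in> freqs D. supp k \<subseteq> u} = {k \<in> freqs D. supp k \<subset> u} \<union> {k \<in> freqs D. supp k = u}"
    by auto
  also have "sser D c \<dots> x = sser D c {k \<in> freqs D. supp k \<subset> u} x + sser D c {k \<in> freqs D. supp k = u} x"
    by (rule sser_Un[OF c]) auto
  finally show ?case by simp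
qed

lemma truncation_ser:
  assumes D: "finite D" and c: "(\<lambda>k. norm (c k)) summable_on freqs D"
  shows "truncation D ds (ser D c) x = sser D c {k \<in> freqs D. card (supp k) \<le> ds} x"
proof -
  have fin: "finite {u. u \<subseteq> D \<and> card u \<le> ds}" using D by auto
  have "truncation D ds (ser D c) x = (\<Sum>u\<in>{u. u \<subseteq> D \<and> card u \<le> ds}. sser D c {k \<in> freqs D. supp k = u} x)"
    unfolding truncation_def
    by (rule sum.cong[OF refl], rule anova_ser[OF D c]) (auto intro: finite_subset[OF _ D])
  also have "\<dots> = sser D c (\<Union>u\<in>{u. u \<subseteq> D \<and> card u \<le> ds}. {k \<in> freqs D. supp k = u}) x"
    using fin by (intro sser_UN c) auto
  also have "(\<Union>u\<in>{u. u \<subseteq> D \<and> card u \<le> ds}. {k \<in> freqs D. supp k = u}) = {k \<in> freqs D. card (supp k) \<le> ds}"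
    using supp_freqs by blast
  finally show ?thesis .
qed

lemma ser_minus_truncation:
  assumes D: "finite D" and c: "(\<lambda>k. norm (c k)) summable_on freqs D"
  shows "ser D c x - truncation D ds (ser D c) x = sser D c {k \<in> freqs D. ds < card (supp k)} x"
proof -
  have "ser D c x = sser D c ({k \<in> freqs D. card (supp k) \<le> ds} \<union> {k \<in> freqs D. ds < card (supp k)}) x"
    unfolding ser_def sser_def by (rule arg_cong[where f="infsum _"]) auto
  also have "\<dots> = sser D c {k \<in> freqs D. card (supp k) \<le> ds} x + sser D c {k \<in> freqs D. ds < card (supp k)} x"
    by (rule sser_Un[OF c]) auto
  finally show ?thesis using truncation_ser[OF D c] by simp
qed

definition pmerge :: "nat set \<Rightarrow> (nat \<Rightarrow> real) \<Rightarrow> (nat \<Rightarrow> real) \<Rightarrow> (nat \<Rightarrow> real)" where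
  "pmerge u x y = (\<lambda>i. if i \<in> u then x i else y i)"

lemma pmerge_meas:
  assumes u: "u \<subseteq> D"
  shows "(\<lambda>p. pmerge u (fst p) (snd p)) \<in> measurable (torus D \<Otimes>\<^sub>M torus (D - u)) (torus D)"
  unfolding torus_def pmerge_def
proof (rule measurable_PiM_single')
  fix i assume i: "i \<in> D"
  show "(\<lambda>p. if i \<in> u then fst p i else snd p i) \<in> measurable (PiM D (\<lambda>_. UI) \<Otimes>\<^sub>M PiM (D - u) (\<lambda>_. UI)) UI"
  proof (cases "i \<in> u")
    case True
    then show ?thesis
      using measurable_compose[OF measurable_fst measurable_component_singleton[OF i]] by simp
  next
    case False
    then have "i \<in> D - u" using i by simp
    then show ?thesis
      using False measurable_compose[OF measurable_snd measurable_component_singleton[of i "D - u"]] by simp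
  qed
next
  show "(\<lambda>p i. if i \<in> u then fst p i else snd p i) \<in> space (PiM D (\<lambda>_. UI) \<Otimes>\<^sub>M PiM (D - u) (\<lambda>_. UI)) \<rightarrow> (\<Pi>\<^sub>E i\<in>D. space UI)"
    using u by (auto simp: space_pair_measure space_PiM PiE_iff extensional_def)
qed

lemma proj_meas:
  assumes u: "u \<subseteq> D" and f: "f \<in> borel_measurable (torus D)"
  shows "proj D u f \<in> borel_measurable (torus D)"
proof -
  have "(\<lambda>p. f (pmerge u (fst p) (snd p))) \<in> borel_measurable (torus D \<Otimes>\<^sub>M torus (D - u))"
    by (rule measurable_compose[OF pmerge_meas[OF u] f])
  then have "case_prod (\<lambda>x y. f (pmerge u x y)) \<in> borel_measurable (torus D \<Otimes>\<^sub>M torus (D - u))"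
    by (simp add: case_prod_beta')
  then have "(\<lambda>x. \<integral>y. f (pmerge u x y) \<partial>torus (D - u)) \<in> borel_measurable (torus D)"
    by (rule TP.borel_measurable_lebesgue_integral)
  then show ?thesis unfolding proj_def pmerge_def[abs_def] by simp
qed

lemma anova_meas:
  assumes f: "f \<in> borel_measurable (torus D)"
  shows "finite u \<Longrightarrow> u \<subseteq> D \<Longrightarrow> anova D f u \<in> borel_measurable (torus D)"
proof (induction u rule: finite_psubset_induct)
  case (psubset u)
  have eq: "anova D f u = (\<lambda>x. proj D u f x - (\<Sum>v\<in>Pow u - {u}. anova D f v x))"
    using psubset.hyps(1) by (subst anova.simps) simp
  have "(\<lambda>x. \<Sum>v\<in>Pow u - {u}. anova D f v x) \<in> borel_measurable (torus D)"
  proof (rule borel_measurable_sum)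
    fix v assume v: "v \<in> Pow u - {u}"
    then have "v \<subset> u" "v \<subseteq> D" using psubset.prems by auto
    then show "anova D f v \<in> borel_measurable (torus D)"
      using psubset.IH by blast
  qed
  then show ?case unfolding eq using proj_meas[OF psubset.prems f] by measurable
qed

lemma truncation_meas:
  assumes D: "finite D" and f: "f \<in> borel_measurable (torus D)"
  shows "truncation D ds f \<in> borel_measurable (torus D)"
  unfolding truncation_def
  by (rule borel_measurable_sum, rule anova_meas[OF f]) (auto intro: finite_subset[OF _ D])

lemma AE_proj_eq:
  assumes D: "finite D" and u: "u \<subseteq> D"
    and f: "f \<in> borel_measurable (torus D)" and g: "g \<in> borel_measurable (torus D)"
    and fg: "AE z in torus D. f z = g z"
  shows "AE x in torus D. proj D u f x = proj D u g x"
proof -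
  have DU: "u \<union> (D - u) = D" using u by auto
  have fin: "finite u" "finite (D - u)" using D u by (auto intro: finite_subset)
  have dm: "distr (torus u \<Otimes>\<^sub>M torus (D - u)) (torus D) (merge u (D - u)) = torus D"
    using UIP.distr_merge[of u "D - u"] fin DU unfolding torus_def by simp
  have mm: "merge u (D - u) \<in> measurable (torus u \<Otimes>\<^sub>M torus (D - u)) (torus D)"
    using measurable_merge[of u "D - u" "\<lambda>_. UI"] DU unfolding torus_def by simp
  have "AE z in distr (torus u \<Otimes>\<^sub>M torus (D - u)) (torus D) (merge u (D - u)). f z = g z"
    by (subst dm) (rule fg)
  then have ae1: "AE p in torus u \<Otimes>\<^sub>M torus (D - u). f (merge u (D - u) p) = g (merge u (D - u) p)"
    by (rule AE_distrD[OF mm])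
  interpret P: pair_sigma_finite "torus u" "torus (D - u)"
    by (simp add: pair_sigma_finite_def prob_space_imp_sigma_finite[OF torus_prob])
  from ae1 have ae2: "AE x' in torus u. AE y in torus (D - u). f (merge u (D - u) (x', y)) = g (merge u (D - u) (x', y))"
    by (rule P.AE_pair)
  define Pf where "Pf = (\<lambda>x'. \<integral>y. f (merge u (D - u) (x', y)) \<partial>torus (D - u))"
  define Pg where "Pg = (\<lambda>x'. \<integral>y. g (merge u (D - u) (x', y)) \<partial>torus (D - u))"
  have "AE x' in torus u. Pf x' = Pg x'"
    using ae2 AE_space
  proof (eventually_elim)
    case (elim x')
    have fm: "(\<lambda>p. f (merge u (D - u) p)) \<in> borel_measurable (torus u \<Otimes>\<^sub>M torus (D - u))"
      by (rule measurable_compose[OF mm f])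
    have gm: "(\<lambda>p. g (merge u (D - u) p)) \<in> borel_measurable (torus u \<Otimes>\<^sub>M torus (D - u))"
      by (rule measurable_compose[OF mm g])
    show ?case unfolding Pf_def Pg_def
      by (rule integral_cong_AE[OF measurable_Pair2[OF fm elim(2)] measurable_Pair2[OF gm elim(2)] elim(1)])
  qed
  moreover have r: "distr (torus D) (torus u) (\<lambda>z. restrict z u) = torus u"
    using UIP.distr_restrict[of u D] u D unfolding torus_def by simp
  ultimately have "AE z in distr (torus D) (torus u) (\<lambda>z. restrict z u). Pf z = Pg z"
    by (subst r)
  then have ae3: "AE z in torus D. Pf (restrict z u) = Pg (restrict z u)"
    by (rule AE_distrD[OF measurable_restrict_subset[OF u, of "\<lambda>_. UI", folded torus_def]])
  have eqf: "proj D u h z = (\<integral>y. h (merge u (D - u) (restrict z u, y)) \<partial>torus (D - u))" for h z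
    unfolding proj_def
  proof (rule Bochner_Integration.integral_cong[OF refl])
    fix y assume "y \<in> space (torus (D - u))"
    then have "\<forall>i. i \<notin> D - u \<longrightarrow> y i = undefined" by (auto simp: space_torus PiE_iff extensional_def)
    then have "(\<lambda>i. if i \<in> u then z i else y i) = merge u (D - u) (restrict z u, y)"
      by (auto simp: merge_def fun_eq_iff)
    then show "h (\<lambda>i. if i \<in> u then z i else y i) = h (merge u (D - u) (restrict z u, y))" by simp
  qed
  show ?thesis using ae3 by (simp add: eqf Pf_def Pg_def)
qed

lemma AE_truncation_eq:
  assumes D: "finite D"
    and f: "f \<in> borel_measurable (torus D)" and g: "g \<in> borel_measurable (torus D)"
    and fg: "AE z in torus D. f z = g z"
  shows "AE x in torus D. truncation D ds f x = truncation D ds g x"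
proof -
  have "AE x in torus D. \<forall>u\<in>Pow D. proj D u f x = proj D u g x"
    using D by (intro AE_finite_allI AE_proj_eq[OF D _ f g fg]) auto
  then show ?thesis
  proof (rule AE_mp[OF _ AE_I2], intro impI)
    fix x assume x: "\<forall>u\<in>Pow D. proj D u f x = proj D u g x"
    have an: "finite u \<Longrightarrow> u \<subseteq> D \<Longrightarrow> anova D f u x = anova D g u x" for u
    proof (induction u rule: finite_psubset_induct)
      case (psubset u)
      have "anova D f u x = proj D u f x - (\<Sum>v\<in>Pow u - {u}. anova D f v x)"
        using psubset.hyps(1) by (subst anova.simps) simp
      also have "\<dots> = proj D u g x - (\<Sum>v\<in>Pow u - {u}. anova D g v x)"
      proof (intro arg_cong2[where f="(-)"] sum.cong refl)
        show "proj D u f x = proj D u g x" using x psubset.prems by auto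
        fix v assume v: "v \<in> Pow u - {u}"
        then have "v \<subset> u" by blast
        moreover have "v \<subseteq> D" using v psubset.prems by blast
        moreover have "finite v" using v psubset.hyps(1) finite_subset by blast
        ultimately show "anova D f v x = anova D g v x"
          using psubset.IH by blast
      qed
      also have "\<dots> = anova D g u x"
        using psubset.hyps(1) by (subst (2) anova.simps) simp
      finally show ?case .
    qed
    show "truncation D ds f x = truncation D ds g x"
      unfolding truncation_def
    proof (rule sum.cong[OF refl])
      fix u assume "u \<in> {u. u \<subseteq> D \<and> card u \<le> ds}"
      then have u: "u \<subseteq> D" by blast
      then have "finite u" using D finite_subset by blast
      then show "anova D f u x = anova D g u x" using u by (rule an)
    qed
  qed
qed

lemma sort_remove_max:
  fixes xs :: "real list"
  assumes "xs \<noteq> []"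
  shows "rev (sort xs) = Max (set xs) # rev (sort (remove1 (Max (set xs)) xs))"
proof -
  let ?x = "Max (set xs)"
  have x: "?x \<in> set xs" using assms by simp
  have "sort xs = sort (remove1 ?x xs) @ [?x]"
  proof (rule properties_for_sort)
    show "mset (sort (remove1 ?x xs) @ [?x]) = mset xs"
      using x by simp
    have "\<forall>y\<in>set (remove1 ?x xs). y \<le> ?x"
      using set_remove1_subset[of ?x xs] by (auto dest!: subsetD)
    then show "sorted (sort (remove1 ?x xs) @ [?x])"
      by (simp add: sorted_append)
  qed
  then show ?thesis by simp
qed

lemma prod_mset_nonneg':
  fixes A :: "real multiset"
  shows "(\<And>a. a \<in># A \<Longrightarrow> 0 \<le> a) \<Longrightarrow> 0 \<le> prod_mset A"
  by (induction A) auto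

lemma prod_mset_le_one':
  fixes A :: "real multiset"
  shows "(\<And>a. a \<in># A \<Longrightarrow> 0 \<le> a \<and> a \<le> 1) \<Longrightarrow> prod_mset A \<le> 1"
proof (induction A)
  case empty
  then show ?case by simp
next
  case (add x A)
  then have "prod_mset A \<le> 1" "0 \<le> x" "x \<le> 1" by auto
  moreover have "0 \<le> prod_mset A" using add.prems by (intro prod_mset_nonneg') auto
  ultimately show ?case by (simp add: mult_le_one)
qed

lemma prod_mset_le_top:
  fixes xs :: "real list"
  shows "A \<subseteq># mset xs \<Longrightarrow> (\<forall>x\<in>set xs. 0 \<le> x \<and> x \<le> 1) \<Longrightarrow> m \<le> size A
    \<Longrightarrow> prod_mset A \<le> prod_list (take m (rev (sort xs)))"
proof (induction m arbitrary: xs A)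
  case 0
  have "prod_mset A \<le> 1" using 0 by (intro prod_mset_le_one') (auto dest: mset_subset_eqD)
  then show ?case by simp
next
  case (Suc m)
  then have "A \<noteq> {#}" by auto
  then obtain y where y: "y \<in># A" by blast
  have "xs \<noteq> []" using Suc.prems(1) y by auto
  define x where "x = Max (set xs)"
  have xin: "x \<in> set xs" using \<open>xs \<noteq> []\<close> unfolding x_def by simp
  have ymax: "y \<le> x" using y Suc.prems(1) unfolding x_def by (auto dest: mset_subset_eqD)
  have x01: "0 \<le> x" "x \<le> 1" using xin Suc.prems(2) by auto
  have rs: "rev (sort xs) = x # rev (sort (remove1 x xs))"
    unfolding x_def by (rule sort_remove_max[OF \<open>xs \<noteq> []\<close>])
  have rem: "\<forall>z\<in>set (remove1 x xs). 0 \<le> z \<and> z \<le> 1"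
    using Suc.prems(2) set_remove1_subset[of x xs] by blast
  show ?case
  proof (cases "x \<in># A")
    case True
    have A': "A - {#x#} \<subseteq># mset (remove1 x xs)"
      using Suc.prems(1) unfolding subseteq_mset_def by (auto intro: diff_le_mono)
    have sz: "m \<le> size (A - {#x#})" using Suc.prems(3) True by (simp add: size_Diff_singleton)
    have IH: "prod_mset (A - {#x#}) \<le> prod_list (take m (rev (sort (remove1 x xs))))"
      by (rule Suc.IH[OF A' rem sz])
    obtain B where B: "A = add_mset x B" using multi_member_split[OF True] by blast
    have "prod_mset A = x * prod_mset (A - {#x#})" unfolding B by simp
    also have "\<dots> \<le> x * prod_list (take m (rev (sort (remove1 x xs))))"
      using IH x01 by (intro mult_left_mono) auto
    also have "\<dots> = prod_list (take (Suc m) (rev (sort xs)))" using rs by simp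
    finally show ?thesis .
  next
    case False
    have A1: "A \<subseteq># mset (remove1 x xs)"
      unfolding subseteq_mset_def
    proof
      fix a
      show "count A a \<le> count (mset (remove1 x xs)) a"
      proof (cases "a = x")
        case True
        then have "count A a = 0" using False by (simp add: not_in_iff)
        then show ?thesis by simp
      next
        case False
        then show ?thesis using Suc.prems(1) unfolding subseteq_mset_def by simp
      qed
    qed
    have A': "A - {#y#} \<subseteq># mset (remove1 x xs)"
      using A1 by (meson diff_subset_eq_self subset_mset.order_trans)
    have sz: "m \<le> size (A - {#y#})" using Suc.prems(3) y by (simp add: size_Diff_singleton)
    have IH: "prod_mset (A - {#y#}) \<le> prod_list (take m (rev (sort (remove1 x xs))))"
      by (rule Suc.IH[OF A' rem sz])
    have nn: "0 \<le> prod_mset (A - {#y#})"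
      using Suc.prems(1,2) by (intro prod_mset_nonneg') (auto dest!: in_diffD mset_subset_eqD)
    obtain B where B: "A = add_mset y B" using multi_member_split[OF y] by blast
    have "prod_mset A = y * prod_mset (A - {#y#})" unfolding B by simp
    also have "\<dots> \<le> x * prod_mset (A - {#y#})"
      using ymax nn by (intro mult_right_mono)
    also have "\<dots> \<le> x * prod_list (take m (rev (sort (remove1 x xs))))"
      using IH x01 by (intro mult_left_mono) auto
    also have "\<dots> = prod_list (take (Suc m) (rev (sort xs)))" using rs by simp
    finally show ?thesis .
  qed
qed

lemma prod_take_nth:
  fixes L :: "real list"
  shows "m \<le> length L \<Longrightarrow> (\<Prod>s=1..m. L ! (s - 1)) = prod_list (take m L)"
proof (induction m)
  case 0
  then show ?case by simp
next
  case (Suc m)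
  then have "m < length L" by simp
  then have "take (Suc m) L = take m L @ [L ! m]" by (rule take_Suc_conv_app_nth)
  then show ?case using Suc by (simp add: prod.cl_ivl_Suc)
qed

lemma prod_gamma_le:
  assumes u: "u \<subseteq> {1..d}" and m: "m \<le> card u" "m \<le> d"
    and g: "\<And>i. i \<in> {1..d} \<Longrightarrow> 0 < \<gamma> i \<and> \<gamma> i \<le> 1"
  shows "(\<Prod>s\<in>u. \<gamma> s) \<le> (\<Prod>s=1..m. gamma_star d \<gamma> s)"
proof -
  let ?xs = "map \<gamma> [1..<d+1]"
  have fu: "finite u" using u finite_subset by blast
  have "(\<Prod>s\<in>u. \<gamma> s) = prod_mset (image_mset \<gamma> (mset_set u))"
    by (rule prod_unfold_prod_mset)
  also have "\<dots> \<le> prod_list (take m (rev (sort ?xs)))"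
  proof (rule prod_mset_le_top)
    have "{1..<d+1} = {1..d}" by auto
    then have "mset_set u \<subseteq># mset_set {1..<d+1}" using u fu by simp
    moreover have "mset ?xs = image_mset \<gamma> (mset_set {1..<d+1})"
      by (simp only: mset_map mset_upt)
    ultimately show "image_mset \<gamma> (mset_set u) \<subseteq># mset ?xs"
      by (simp only: image_mset_subseteq_mono)
    show "\<forall>x\<in>set ?xs. 0 \<le> x \<and> x \<le> 1" using g by fastforce
    show "m \<le> size (image_mset \<gamma> (mset_set u))" using m by simp
  qed
  also have "\<dots> = (\<Prod>s=1..m. gamma_star d \<gamma> s)"
    unfolding gamma_star_def by (rule prod_take_nth[symmetric]) (use m in simp)
  finally show ?thesis .
qed

lemma key_ineq:
  fixes a n N :: real
  assumes "a \<ge> 1" "N \<ge> n" "n \<ge> 0"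
  shows "(1 + a) * (2 + n) * (1 + N) \<ge> 2 * (1 + n) * (1 + N + a)"
proof -
  have "a * (2 + n) \<ge> 1 * (2 + n)" using assms by (intro mult_right_mono) auto
  then have h: "a * (2 + n) - n \<ge> 0" by simp
  have "(1 + N) * (a * (2 + n) - n) \<ge> (1 + n) * (a * (2 + n) - n)"
    using h assms by (intro mult_right_mono) auto
  moreover have "(1 + n) * (a * n - n) \<ge> 0" using assms by (intro mult_nonneg_nonneg) (auto simp: algebra_simps intro: mult_right_mono[of 1 a n, simplified])
  ultimately show ?thesis by (simp add: algebra_simps)
qed

lemma P_bound:
  fixes a :: "nat \<Rightarrow> real"
  assumes "finite u" "\<And>s. s \<in> u \<Longrightarrow> a s \<ge> 1"
  shows "(\<Prod>s\<in>u. 1 + a s) * (1 + real (card u)) \<ge> 2 ^ card u * (1 + (\<Sum>s\<in>u. a s))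
         \<and> (\<Sum>s\<in>u. a s) \<ge> real (card u)"
  using assms
proof (induction u rule: finite_induct)
  case empty
  then show ?case by simp
next
  case (insert s u)
  define P where "P = (\<Prod>s\<in>u. 1 + a s)"
  define N where "N = (\<Sum>s\<in>u. a s)"
  define n where "n = real (card u)"
  have IH: "P * (1 + n) \<ge> 2 ^ card u * (1 + N)" "N \<ge> n"
    using insert unfolding P_def N_def n_def by auto
  have as: "a s \<ge> 1" using insert by auto
  have n0: "n \<ge> 0" unfolding n_def by simp
  have K: "(1 + a s) * (2 + n) * (1 + N) \<ge> 2 * (1 + n) * (1 + N + a s)"
    by (rule key_ineq[OF as IH(2) n0])
  have pos: "(1 + a s) * (2 + n) \<ge> 0" using as n0 by simp
  have "(1 + n) * ((1 + a s) * P * (2 + n)) = ((1 + a s) * (2 + n)) * (P * (1 + n))" by (simp add: algebra_simps)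
  also have "\<dots> \<ge> ((1 + a s) * (2 + n)) * (2 ^ card u * (1 + N))"
    using IH(1) pos by (intro mult_left_mono) auto
  also have "((1 + a s) * (2 + n)) * (2 ^ card u * (1 + N)) = 2 ^ card u * ((1 + a s) * (2 + n) * (1 + N))"
    by (simp add: algebra_simps)
  also have "\<dots> \<ge> 2 ^ card u * (2 * (1 + n) * (1 + N + a s))"
    using K by (intro mult_left_mono) auto
  finally have "(1 + n) * ((1 + a s) * P * (2 + n)) \<ge> (1 + n) * (2 * 2 ^ card u * (1 + N + a s))"
    by (simp add: algebra_simps)
  then have "(1 + a s) * P * (2 + n) \<ge> 2 * 2 ^ card u * (1 + N + a s)"
    using n0 by (simp add: mult_le_cancel_left_pos)
  moreover have "(\<Prod>s\<in>insert s u. 1 + a s) = (1 + a s) * P"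
    "(\<Sum>s\<in>insert s u. a s) = a s + N" "real (card (insert s u)) = 1 + n"
    using insert unfolding P_def N_def n_def by auto
  moreover have "card (insert s u) = Suc (card u)" using insert by simp
  ultimately show ?case using IH(2) as
    by (simp add: algebra_simps)
qed

lemma prod_powr:
  fixes f :: "nat \<Rightarrow> real"
  shows "finite u \<Longrightarrow> (\<And>s. s \<in> u \<Longrightarrow> f s \<ge> 0) \<Longrightarrow> (\<Prod>s\<in>u. f s powr r) = (\<Prod>s\<in>u. f s) powr r"
  by (induction u rule: finite_induct) (auto simp: powr_mult prod_nonneg)

lemma E_bound:
  fixes a :: "nat \<Rightarrow> real" and \<alpha> \<beta> :: real
  assumes u: "finite u" and a: "\<And>s. s \<in> u \<Longrightarrow> a s \<ge> 1"
    and b: "\<beta> \<ge> 0" and ab: "\<alpha> + \<beta> > 0"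
  shows "(1 + (\<Sum>s\<in>u. a s)) powr \<alpha> * (\<Prod>s\<in>u. (1 + a s) powr \<beta>)
       \<ge> 2 powr (\<beta> * real (card u)) * (1 + real (card u)) powr \<alpha>"
proof -
  define P where "P = (\<Prod>s\<in>u. 1 + a s)"
  define N where "N = (\<Sum>s\<in>u. a s)"
  define n where "n = real (card u)"
  have PB: "P * (1 + n) \<ge> 2 ^ card u * (1 + N)" "N \<ge> n"
    using P_bound[OF u a] unfolding P_def N_def n_def by auto
  have n0: "n \<ge> 0" unfolding n_def by simp
  have N0: "N \<ge> 0" using PB n0 by simp
  have pp: "(\<Prod>s\<in>u. (1 + a s) powr \<beta>) = P powr \<beta>"
  proof (unfold P_def, rule prod_powr[OF u])
    fix s assume "s \<in> u" then have "a s \<ge> 1" by (rule a)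
    then show "1 + a s \<ge> 0" by simp
  qed
  have P2: "P \<ge> 2 ^ card u"
  proof -
    have "(\<Prod>s\<in>u. (2::real)) \<le> P" unfolding P_def using a by (intro prod_mono) auto
    then show ?thesis by simp
  qed
  have pow2: "(2 ^ card u :: real) powr \<beta> = 2 powr (\<beta> * n)"
    unfolding n_def by (simp add: powr_realpow[symmetric] powr_powr mult.commute)
  have P0: "P > 0" using P2 by (smt (verit) zero_less_power)
  show ?thesis
  proof (cases "\<alpha> \<ge> 0")
    case True
    have "2 powr (\<beta> * n) \<le> P powr \<beta>" unfolding pow2[symmetric] using P2 b by (intro powr_mono2) auto
    moreover have "(1 + n) powr \<alpha> \<le> (1 + N) powr \<alpha>" using True PB n0 by (intro powr_mono2) auto
    ultimately have "2 powr (\<beta> * n) * (1 + n) powr \<alpha> \<le> P powr \<beta> * (1 + N) powr \<alpha>"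
      by (intro mult_mono) auto
    then show ?thesis unfolding pp N_def[symmetric] n_def[symmetric] by (simp add: mult.commute)
  next
    case False
    define r where "r = (1 + N) / (1 + n)"
    have r1: "r \<ge> 1" unfolding r_def using PB n0 by simp
    have "P \<ge> 2 ^ card u * r" unfolding r_def using PB(1) n0 by (simp add: field_simps)
    then have A: "P powr \<beta> \<ge> (2 ^ card u * r) powr \<beta>" using b r1 by (intro powr_mono2) auto
    have B: "(2 ^ card u * r) powr \<beta> = 2 powr (\<beta> * n) * r powr \<beta>"
      using r1 by (simp add: powr_mult pow2)
    have C: "r powr \<beta> \<ge> r powr (- \<alpha>)" using r1 ab by (intro powr_mono) auto
    have D1: "2 powr (\<beta> * n) * r powr (- \<alpha>) \<le> 2 powr (\<beta> * n) * r powr \<beta>"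
      using C by (intro mult_left_mono) auto
    then have "P powr \<beta> \<ge> 2 powr (\<beta> * n) * r powr (- \<alpha>)"
      using A B by linarith
    then have "(1 + N) powr \<alpha> * P powr \<beta> \<ge> (1 + N) powr \<alpha> * (2 powr (\<beta> * n) * r powr (- \<alpha>))"
      by (intro mult_left_mono) auto
    also have "(1 + N) powr \<alpha> * (2 powr (\<beta> * n) * r powr (- \<alpha>)) = 2 powr (\<beta> * n) * (1 + n) powr \<alpha>"
      unfolding r_def using N0 n0 by (simp add: powr_divide powr_minus field_simps)
    finally show ?thesis unfolding pp N_def[symmetric] n_def[symmetric] .
  qed
qed

lemma psi_mono:
  fixes \<alpha> \<beta> :: real
  assumes b: "\<beta> \<ge> 0" and ab: "\<alpha> + \<beta> > 0" and mn: "m \<le> n"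
  shows "2 powr (\<beta> * real m) * (1 + real m) powr \<alpha> \<le> 2 powr (\<beta> * real n) * (1 + real n) powr \<alpha>"
proof (rule lift_Suc_mono_le[OF _ mn, of "\<lambda>n. 2 powr (\<beta> * real n) * (1 + real n) powr \<alpha>"])
  fix n :: nat
  have e: "2 powr (\<beta> * real (Suc n)) = 2 powr \<beta> * 2 powr (\<beta> * real n)"
    by (simp add: powr_add[symmetric] algebra_simps)
  have "(1 + real n) powr \<alpha> \<le> 2 powr \<beta> * (1 + real (Suc n)) powr \<alpha>"
  proof (cases "\<alpha> \<ge> 0")
    case True
    have "(1 + real n) powr \<alpha> \<le> (1 + real (Suc n)) powr \<alpha>" using True by (intro powr_mono2) auto
    also have "\<dots> \<le> 2 powr \<beta> * (1 + real (Suc n)) powr \<alpha>"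
    proof -
      have "1 \<le> 2 powr \<beta>" using b by (intro ge_one_powr_ge_zero) auto
      then show ?thesis using mult_right_mono[of 1 "2 powr \<beta>" "(1 + real (Suc n)) powr \<alpha>"] by simp
    qed
    finally show ?thesis .
  next
    case False
    have q: "(2 + real n) / (1 + real n) \<le> 2" by (simp add: field_simps)
    have "2 powr \<alpha> \<le> ((2 + real n) / (1 + real n)) powr \<alpha>"
      using False q by (intro powr_mono2') auto
    then have "2 powr \<beta> * 2 powr \<alpha> * (1 + real n) powr \<alpha> \<le> 2 powr \<beta> * (((2 + real n) / (1 + real n)) powr \<alpha> * (1 + real n) powr \<alpha>)"
      by (simp add: mult_left_mono mult_right_mono mult.assoc)
    also have "((2 + real n) / (1 + real n)) powr \<alpha> * (1 + real n) powr \<alpha> = (2 + real n) powr \<alpha>"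
      by (simp add: powr_divide)
    finally have "2 powr (\<beta> + \<alpha>) * (1 + real n) powr \<alpha> \<le> 2 powr \<beta> * (1 + real (Suc n)) powr \<alpha>"
      by (simp add: powr_add add_ac)
    moreover have "1 \<le> 2 powr (\<beta> + \<alpha>)" using ab by (intro ge_one_powr_ge_zero) auto
    ultimately have "1 * (1 + real n) powr \<alpha> \<le> 2 powr (\<beta> + \<alpha>) * (1 + real n) powr \<alpha>"
      by (intro mult_right_mono) auto
    with \<open>2 powr (\<beta> + \<alpha>) * (1 + real n) powr \<alpha> \<le> 2 powr \<beta> * (1 + real (Suc n)) powr \<alpha>\<close>
    show ?thesis by linarith
  qed
  then show "2 powr (\<beta> * real n) * (1 + real n) powr \<alpha> \<le> 2 powr (\<beta> * real (Suc n)) * (1 + real (Suc n)) powr \<alpha>"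
  proof -
    from \<open>(1 + real n) powr \<alpha> \<le> 2 powr \<beta> * (1 + real (Suc n)) powr \<alpha>\<close>
    have "2 powr (\<beta> * real n) * (1 + real n) powr \<alpha> \<le> 2 powr (\<beta> * real n) * (2 powr \<beta> * (1 + real (Suc n)) powr \<alpha>)"
      by (intro mult_left_mono) auto
    also have "\<dots> = 2 powr (\<beta> * real (Suc n)) * (1 + real (Suc n)) powr \<alpha>"
      unfolding e by (simp only: ac_simps)
    finally show ?thesis .
  qed
qed

lemma norm1_supp:
  assumes "k \<in> freqs D" "finite D"
  shows "norm1 D k = (\<Sum>i\<in>supp k. real_of_int \<bar>k i\<bar>)"
  unfolding norm1_def
  by (rule sum.mono_neutral_right) (use assms supp_freqs[OF assms(1)] in \<open>auto simp: supp_def\<close>)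

lemma supp_finite: "k \<in> freqs D \<Longrightarrow> finite D \<Longrightarrow> finite (supp k)"
  using supp_freqs finite_subset by blast

lemma wab_E_bound:
  assumes k: "k \<in> freqs D" and D: "finite D" and b: "\<beta> \<ge> 0" and ab: "\<alpha> + \<beta> > 0"
  shows "(1 + norm1 D k) powr \<alpha> * (\<Prod>s\<in>supp k. (1 + real_of_int \<bar>k s\<bar>) powr \<beta>)
     \<ge> 2 powr (\<beta> * real (card (supp k))) * (1 + real (card (supp k))) powr \<alpha>"
  unfolding norm1_supp[OF k D]
proof (rule E_bound[OF supp_finite[OF k D] _ b ab])
  fix s assume "s \<in> supp k"
  then have "k s \<noteq> 0" by (simp add: supp_def)
  then show "1 \<le> real_of_int \<bar>k s\<bar>" by simp
qed

lemma pw_bounds: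
  assumes k: "k \<in> freqs {1..d}"
    and G0: "0 < \<Gamma> 0" "\<Gamma> 0 \<le> 1"
    and G: "\<And>i. i \<in> {1..d} \<Longrightarrow> 0 < \<Gamma> i \<and> \<Gamma> i \<le> 1"
    and g: "\<And>i. i \<in> {1..d} \<Longrightarrow> 0 < \<gamma> i \<and> \<gamma> i \<le> 1"
  shows "0 < pod_weight \<Gamma> \<gamma> (supp k) \<and> pod_weight \<Gamma> \<gamma> (supp k) \<le> 1"
proof -
  have su: "supp k \<subseteq> {1..d}" by (rule supp_freqs[OF k])
  then have "card (supp k) \<le> d" using card_mono[OF _ su] by simp
  then have Gc: "0 < \<Gamma> (card (supp k)) \<and> \<Gamma> (card (supp k)) \<le> 1"
    using G0 G[of "card (supp k)"] by (cases "card (supp k) = 0") auto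
  have gs: "\<And>s. s \<in> supp k \<Longrightarrow> 0 < \<gamma> s \<and> \<gamma> s \<le> 1" using g su by blast
  have p1: "0 < (\<Prod>s\<in>supp k. \<gamma> s)" using gs by (intro prod_pos) auto
  have gs': "\<And>s. s \<in> supp k \<Longrightarrow> 0 \<le> \<gamma> s \<and> \<gamma> s \<le> 1" using gs by (simp add: less_imp_le)
  have p2: "(\<Prod>s\<in>supp k. \<gamma> s) \<le> 1" using gs' by (rule prod_le_1)
  show ?thesis unfolding pod_weight_def using Gc p1 p2 by (auto intro: mult_le_one)
qed

lemma wab_ge1:
  assumes k: "k \<in> freqs {1..d}" and b: "\<beta> \<ge> 0" and ab: "\<alpha> + \<beta> > 0"
    and G0: "0 < \<Gamma> 0" "\<Gamma> 0 \<le> 1"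
    and G: "\<And>i. i \<in> {1..d} \<Longrightarrow> 0 < \<Gamma> i \<and> \<Gamma> i \<le> 1"
    and g: "\<And>i. i \<in> {1..d} \<Longrightarrow> 0 < \<gamma> i \<and> \<gamma> i \<le> 1"
  shows "1 \<le> wab {1..d} \<alpha> \<beta> \<Gamma> \<gamma> k"
proof -
  define pw where "pw = pod_weight \<Gamma> \<gamma> (supp k)"
  define E where "E = (1 + norm1 {1..d} k) powr \<alpha> * (\<Prod>s\<in>supp k. (1 + real_of_int \<bar>k s\<bar>) powr \<beta>)"
  have pw: "0 < pw" "pw \<le> 1" using pw_bounds[where \<Gamma>=\<Gamma> and \<gamma>=\<gamma>, OF k G0 G g] unfolding pw_def by auto
  have "E \<ge> 2 powr (\<beta> * real (card (supp k))) * (1 + real (card (supp k))) powr \<alpha>"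
    unfolding E_def by (rule wab_E_bound[OF k _ b ab]) simp
  moreover have "2 powr (\<beta> * real (card (supp k))) * (1 + real (card (supp k))) powr \<alpha> \<ge> 2 powr (\<beta> * real 0) * (1 + real 0) powr \<alpha>"
    by (rule psi_mono[OF b ab]) simp
  ultimately have E1: "E \<ge> 1" by simp
  have "wab {1..d} \<alpha> \<beta> \<Gamma> \<gamma> k = E / pw"
    unfolding wab_def E_def pw_def by (simp add: field_simps)
  also have "\<dots> \<ge> 1" using E1 pw by (simp add: field_simps)
  finally show ?thesis .
qed

lemma wab_bound:
  assumes k: "k \<in> freqs {1..d}" and b: "\<beta> \<ge> 0" and ab: "\<alpha> + \<beta> > 0"
    and G0: "0 < \<Gamma> 0" "\<Gamma> 0 \<le> 1"
    and G: "\<And>i. i \<in> {1..d} \<Longrightarrow> 0 < \<Gamma> i \<and> \<Gamma> i \<le> 1"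
    and Gm: "\<And>i j. 1 \<le> i \<Longrightarrow> i \<le> j \<Longrightarrow> j \<le> d \<Longrightarrow> \<Gamma> j \<le> \<Gamma> i"
    and g: "\<And>i. i \<in> {1..d} \<Longrightarrow> 0 < \<gamma> i \<and> \<gamma> i \<le> 1"
    and ds: "ds + 1 \<le> d" and n: "ds < card (supp k)"
  shows "1 \<le> (\<Gamma> (ds + 1) * (2 + real ds) powr (- \<alpha>) * 2 powr (- \<beta> * real (ds + 1))
               * (\<Prod>s=1..ds+1. gamma_star d \<gamma> s)) * wab {1..d} \<alpha> \<beta> \<Gamma> \<gamma> k"
proof -
  define pw where "pw = pod_weight \<Gamma> \<gamma> (supp k)"
  define E where "E = (1 + norm1 {1..d} k) powr \<alpha> * (\<Prod>s\<in>supp k. (1 + real_of_int \<bar>k s\<bar>) powr \<beta>)"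
  define P\<gamma> where "P\<gamma> = (\<Prod>s=1..ds+1. gamma_star d \<gamma> s)"
  define X where "X = \<Gamma> (ds + 1) * P\<gamma>"
  define Y where "Y = (2 + real ds) powr (- \<alpha>) * 2 powr (- \<beta> * real (ds + 1))"
  define \<psi> where "\<psi> = 2 powr (\<beta> * real (ds + 1)) * (1 + real (ds + 1)) powr \<alpha>"
  have su: "supp k \<subseteq> {1..d}" by (rule supp_freqs[OF k])
  have cd: "card (supp k) \<le> d" using card_mono[OF _ su] by simp
  have pw: "0 < pw" using pw_bounds[where \<Gamma>=\<Gamma> and \<gamma>=\<gamma>, OF k G0 G g] unfolding pw_def by auto
  have "E \<ge> 2 powr (\<beta> * real (card (supp k))) * (1 + real (card (supp k))) powr \<alpha>"
    unfolding E_def by (rule wab_E_bound[OF k _ b ab]) simp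
  moreover have "2 powr (\<beta> * real (card (supp k))) * (1 + real (card (supp k))) powr \<alpha> \<ge> \<psi>"
    unfolding \<psi>_def by (rule psi_mono[OF b ab]) (use n in simp)
  ultimately have E\<psi>: "E \<ge> \<psi>" by simp
  have Y\<psi>: "Y * \<psi> = 1"
  proof -
    have "1 + real (ds + 1) = 2 + real ds" by simp
    then have "Y * \<psi> = ((2 + real ds) powr (- \<alpha>) * (2 + real ds) powr \<alpha>) * (2 powr (- \<beta> * real (ds + 1)) * 2 powr (\<beta> * real (ds + 1)))"
      unfolding Y_def \<psi>_def by (simp only: ac_simps)
    also have "\<dots> = 1" by (simp add: powr_add[symmetric])
    finally show ?thesis .
  qed
  have Y0: "Y > 0" unfolding Y_def by simp
  have Gle: "\<Gamma> (card (supp k)) \<le> \<Gamma> (ds + 1)" using Gm[of "ds + 1" "card (supp k)"] n cd by simp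
  have G0': "0 \<le> \<Gamma> (card (supp k))" using G[of "card (supp k)"] n cd by simp
  have gle: "(\<Prod>s\<in>supp k. \<gamma> s) \<le> P\<gamma>" unfolding P\<gamma>_def
    by (rule prod_gamma_le[OF su _ ds g]) (use n in auto)
  have g0: "0 \<le> (\<Prod>s\<in>supp k. \<gamma> s)"
  proof (rule prod_nonneg)
    fix s assume "s \<in> supp k"
    then have "s \<in> {1..d}" using su by blast
    then show "0 \<le> \<gamma> s" using g[of s] by simp
  qed
  have pwX: "pw \<le> X" unfolding pw_def X_def pod_weight_def using Gle G0' gle g0
    by (intro mult_mono) (auto intro: order.trans)
  have E0: "\<psi> > 0" unfolding \<psi>_def by simp
  have "1 \<le> X / pw" using pwX pw by simp
  also have "X / pw = X * (Y * \<psi>) / pw" using Y\<psi> by simp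
  also have "\<dots> \<le> X * (Y * E) / pw"
  proof -
    have "X \<ge> 0" using pw pwX by simp
    then have "X * (Y * \<psi>) \<le> X * (Y * E)" using E\<psi> Y0 by (intro mult_left_mono) auto
    then show ?thesis using pw by (simp add: divide_right_mono)
  qed
  also have "\<dots> = (X * Y) * (E / pw)" by simp
  also have "X * Y = \<Gamma> (ds + 1) * (2 + real ds) powr (- \<alpha>) * 2 powr (- \<beta> * real (ds + 1)) * P\<gamma>"
    unfolding X_def Y_def by (simp only: ac_simps)
  also have "E / pw = wab {1..d} \<alpha> \<beta> \<Gamma> \<gamma> k"
    unfolding wab_def E_def pw_def by (simp add: field_simps)
  finally show ?thesis unfolding P\<gamma>_def .
qed

lemma gamma_star_pos:
  assumes g: "\<And>i. i \<in> {1..d} \<Longrightarrow> 0 < \<gamma> i \<and> \<gamma> i \<le> 1" and s: "1 \<le> s" "s \<le> d"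
  shows "0 < gamma_star d \<gamma> s"
proof -
  let ?L = "rev (sort (map \<gamma> [1..<d+1]))"
  have "s - 1 < length ?L" using s by simp
  then have "?L ! (s - 1) \<in> set ?L" by (rule nth_mem)
  moreover have "set ?L = \<gamma> ` {1..<d+1}" by (simp only: set_rev set_sort set_map set_upt)
  moreover have "{1..<d+1} = {1..d}" by auto
  ultimately obtain i where "i \<in> {1..d}" "?L ! (s - 1) = \<gamma> i" by auto
  then show ?thesis unfolding gamma_star_def using g by auto
qed

theorem corollary4p8:
  fixes d ds :: nat and \<alpha> \<beta> :: real and \<Gamma> \<gamma> :: "nat \<Rightarrow> real"
    and f :: "(nat \<Rightarrow> real) \<Rightarrow> complex"
  assumes "d \<ge> 2"
    and "1 \<le> ds" and "ds \<le> d - 1"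
    and "\<beta> \<ge> 0" and "\<alpha> > - \<beta>"
    and "0 < \<Gamma> 0" and "\<Gamma> 0 \<le> 1"
    and "\<And>i. i \<in> {1..d} \<Longrightarrow> 0 < \<Gamma> i \<and> \<Gamma> i \<le> 1"
    and "\<And>i j. 1 \<le> i \<Longrightarrow> i \<le> j \<Longrightarrow> j \<le> d \<Longrightarrow> \<Gamma> j \<le> \<Gamma> i"
    and "\<And>i. i \<in> {1..d} \<Longrightarrow> 0 < \<gamma> i \<and> \<gamma> i \<le> 1"
    and "in_wiener {1..d} (wab {1..d} \<alpha> \<beta> \<Gamma> \<gamma>) f"
  shows "Linf_norm {1..d} (\<lambda>x. f x - truncation {1..d} ds f x)
      \<le> ereal (\<Gamma> (ds + 1) * (2 + real ds) powr (- \<alpha>) * 2 powr (- \<beta> * real (ds + 1))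
               * (\<Prod>s=1..ds+1. gamma_star d \<gamma> s)
               * wiener_norm {1..d} (wab {1..d} \<alpha> \<beta> \<Gamma> \<gamma>) f)"
proof -
  note d2 = assms(1) and ds1 = assms(2) and dsd = assms(3) and b = assms(4) and ab0 = assms(5)
    and G0 = assms(6,7) and G = assms(8) and Gm = assms(9) and g = assms(10) and wi = assms(11)
  let ?D = "{1..d::nat}"
  let ?M = "torus ?D"
  let ?w = "wab ?D \<alpha> \<beta> \<Gamma> \<gamma>"
  define c where "c = fourier_coeff ?D f"
  define B where "B = \<Gamma> (ds + 1) * (2 + real ds) powr (- \<alpha>) * 2 powr (- \<beta> * real (ds + 1))
               * (\<Prod>s=1..ds+1. gamma_star d \<gamma> s)"
  have D: "finite ?D" by simp
  have ab: "\<alpha> + \<beta> > 0" using ab0 by simp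
  have dsd': "ds + 1 \<le> d" using d2 dsd by simp
  have hf: "integrable ?M f" and ws: "(\<lambda>k. ?w k * norm (c k)) summable_on freqs ?D"
    using wi unfolding in_wiener_def c_def by auto
  have w1: "1 \<le> ?w k" if "k \<in> freqs ?D" for k
    by (rule wab_ge1[where \<Gamma>=\<Gamma> and \<gamma>=\<gamma>, OF that b ab G0 G g])
  have cs: "(\<lambda>k. norm (c k)) summable_on freqs ?D"
  proof (rule summable_on_comparison_test[OF ws])
    fix k assume "k \<in> freqs ?D"
    then have "1 * norm (c k) \<le> ?w k * norm (c k)" using w1 by (intro mult_right_mono) auto
    then show "norm (c k) \<le> ?w k * norm (c k)" by simp
  qed simp
  define g where "g = ser ?D c"
  have hg: "integrable ?M g" unfolding g_def by (rule ser_integrable[OF D cs])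
  have coeff0: "fourier_coeff ?D (\<lambda>x. f x - g x) k = 0" if k: "k \<in> freqs ?D" for k
  proof -
    have i1: "integrable ?M (\<lambda>x. f x * chr ?D (- k) x)"
      by (rule integrable_bounded_mult[OF hf chr_meas, where B=1]) simp
    have i2: "integrable ?M (\<lambda>x. g x * chr ?D (- k) x)"
      by (rule integrable_bounded_mult[OF hg chr_meas, where B=1]) simp
    have "fourier_coeff ?D (\<lambda>x. f x - g x) k = (\<integral>x. f x * chr ?D (- k) x - g x * chr ?D (- k) x \<partial>?M)"
      unfolding fourier_coeff_chr by (simp add: left_diff_distrib)
    also have "\<dots> = fourier_coeff ?D f k - fourier_coeff ?D g k"
      using i1 i2 by (simp add: fourier_coeff_chr)
    also have "fourier_coeff ?D g k = c k" unfolding g_def by (rule fourier_coeff_ser[OF D cs k])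
    finally show ?thesis unfolding c_def by simp
  qed
  have "AE x in ?M. f x - g x = 0"
    by (rule fourier_unique[OF D _ coeff0]) (use hf hg in auto)
  then have AEfg: "AE x in ?M. f x = g x" by simp
  have fm: "f \<in> borel_measurable ?M" using hf by (rule borel_measurable_integrable)
  have gm: "g \<in> borel_measurable ?M" using hg by (rule borel_measurable_integrable)
  have AEt: "AE x in ?M. truncation ?D ds f x = truncation ?D ds g x"
    by (rule AE_truncation_eq[OF D fm gm AEfg])
  have B0: "B \<ge> 0"
  proof -
    have "0 \<le> (\<Prod>s=1..ds+1. gamma_star d \<gamma> s)"
      using gamma_star_pos[OF g] dsd' by (intro prod_nonneg) (auto intro: less_imp_le)
    moreover have "0 < \<Gamma> (ds + 1)" using G[of "ds + 1"] dsd' by simp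
    ultimately show ?thesis unfolding B_def by simp
  qed
  let ?K = "{k \<in> freqs ?D. ds < card (supp k)}"
  have Ksub: "?K \<subseteq> freqs ?D" by auto
  have csK: "(\<lambda>k. norm (c k)) summable_on ?K" using cs Ksub by (rule summable_on_subset_banach)
  have wsK: "(\<lambda>k. ?w k * norm (c k)) summable_on ?K" using ws Ksub by (rule summable_on_subset_banach)
  have bound: "norm (g x - truncation ?D ds g x) \<le> B * wiener_norm ?D ?w f" for x
  proof -
    have "g x - truncation ?D ds g x = sser ?D c ?K x"
      unfolding g_def by (rule ser_minus_truncation[OF D cs])
    also have "norm \<dots> \<le> (\<Sum>\<^sub>\<infinity>k\<in>?K. norm (c k * chr ?D k x))"
      unfolding sser_def by (rule norm_infsum_bound) (rule abs_summable_mult_bounded[OF csK], simp)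
    also have "\<dots> = (\<Sum>\<^sub>\<infinity>k\<in>?K. norm (c k))" by (simp add: norm_mult)
    also have "\<dots> \<le> (\<Sum>\<^sub>\<infinity>k\<in>?K. B * (?w k * norm (c k)))"
    proof (rule infsum_mono[OF csK])
      show "(\<lambda>k. B * (?w k * norm (c k))) summable_on ?K" using wsK by (rule summable_on_cmult_right)
      fix k assume k: "k \<in> ?K"
      then have "1 \<le> B * ?w k"
        using wab_bound[where \<Gamma>=\<Gamma> and \<gamma>=\<gamma>, OF _ b ab G0 G Gm g dsd'] unfolding B_def by blast
      then have "1 * norm (c k) \<le> (B * ?w k) * norm (c k)" by (intro mult_right_mono) auto
      then show "norm (c k) \<le> B * (?w k * norm (c k))" by (simp add: mult.assoc)
    qed
    also have "\<dots> = B * (\<Sum>\<^sub>\<infinity>k\<in>?K. ?w k * norm (c k))"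
      by (rule infsum_cmult_right) (use wsK in simp)
    also have "\<dots> \<le> B * (\<Sum>\<^sub>\<infinity>k\<in>freqs ?D. ?w k * norm (c k))"
    proof (rule mult_left_mono[OF _ B0])
      show "(\<Sum>\<^sub>\<infinity>k\<in>?K. ?w k * norm (c k)) \<le> (\<Sum>\<^sub>\<infinity>k\<in>freqs ?D. ?w k * norm (c k))"
      proof (rule infsum_mono2[OF wsK ws Ksub])
        fix k assume "k \<in> freqs ?D - ?K"
        then show "0 \<le> ?w k * norm (c k)" using w1 by (intro mult_nonneg_nonneg) (auto intro: order.trans[of 0 1])
      qed
    qed
    also have "\<dots> = B * wiener_norm ?D ?w f" unfolding wiener_norm_def c_def ..
    finally show ?thesis .
  qed
  have AEb: "AE x in ?M. ereal (norm (f x - truncation ?D ds f x)) \<le> ereal (B * wiener_norm ?D ?w f)"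
    using AEfg AEt
  proof eventually_elim
    case (elim x)
    then show ?case using bound[of x] by simp
  qed
  have meas: "(\<lambda>x. ereal (norm (f x - truncation ?D ds f x))) \<in> borel_measurable ?M"
    using fm truncation_meas[OF D fm, of ds] by measurable
  have "Linf_norm ?D (\<lambda>x. f x - truncation ?D ds f x) \<le> ereal (B * wiener_norm ?D ?w f)"
    unfolding Linf_norm_def by (rule esssup_I[OF meas AEb])
  then show ?thesis unfolding B_def .
qed

end
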